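(* Let $G=(V,E)$ be a finite graph with $m=|E|$ edges whose linear width is at most $\ell$, let $p\in(0,1)$ and $q\in\mathbb N$. Then the transition matrix $\tilde P_{\rm SW}$ of the Swendsen--Wang dynamics for the random-cluster model on $G$ with parameters $p$ and $q$ satisfies \[ \lambda(\tilde P_{\rm SW})\;\ge\;\frac{1}{2\,q^{\ell+1}}\,\frac{1}{m^2}. \]
   Context: The linear width of $G$ is the smallest $\ell$ such that there is an ordering $e_1,\dots,e_{|E|}$ of $E$ with the property that for every $i$ at most $\ell$ vertices are endvertices both of an edge in $\{e_1,\dots,e_i\}$ and of an edge in $\{e_{i+1},\dots,e_{|E|}\}$. For $A\subseteq E$, $c(A)$ is the number of connected components of $(V,A)$; for $\sigma\in\{1,\dots,q\}^V$, $E(\sigma)$ is the set of edges whose endvertices have the same color. Random-cluster measure $\mu(A)\propto(\tfrac{p}{1-p})^{|A|}q^{c(A)}$. Swendsen--Wang dynamics for the RC model: $\tilde P_{\rm SW}(A,B)=q^{-c(A)}\bigl(\tfrac{p}{1-p}\bigr)^{|B|}\sum_{\sigma}(1-p)^{|E(\sigma)|}\mathbf 1(A\cup B\subseteq E(\sigma))$, reversible w.r.t. $\mu$. Spectral gap: $\lambda(P)=1-\max\{|\xi|:\xi\text{ eigenvalue of }P,\ \xi\neq1\}$. *)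

theory Defs
  imports "HOL-Analysis.Analysis"
begin

text \<open>A finite (multi)graph is given by a vertex set V, an edge set E and a map
  ends assigning to each edge its set of endvertices (one or two vertices).\<close>

definition finite_graph :: "'v set \<Rightarrow> 'e set \<Rightarrow> ('e \<Rightarrow> 'v set) \<Rightarrow> bool" where
  "finite_graph V E ends \<longleftrightarrow> finite V \<and> finite E \<and>
     (\<forall>e\<in>E. ends e \<subseteq> V \<and> ends e \<noteq> {} \<and> card (ends e) \<le> 2)"

definition ordering_width :: "('e \<Rightarrow> 'v set) \<Rightarrow> 'e list \<Rightarrow> nat" where
  "ordering_width ends es =
     Max ((\<lambda>i. card ((\<Union>e\<in>set (take i es). ends e) \<inter> (\<Union>e\<in>set (drop i es). ends e)))
          ` {0..length es})"

definition linear_width :: "'e set \<Rightarrow> ('e \<Rightarrow> 'v set) \<Rightarrow> nat" where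
  "linear_width E ends =
     (LEAST l. \<exists>es. distinct es \<and> set es = E \<and> ordering_width ends es \<le> l)"

definition adj_rel :: "('e \<Rightarrow> 'v set) \<Rightarrow> 'e set \<Rightarrow> ('v \<times> 'v) set" where
  "adj_rel ends A = {(u, v). \<exists>e\<in>A. u \<in> ends e \<and> v \<in> ends e}"

definition conn_rel :: "'v set \<Rightarrow> ('e \<Rightarrow> 'v set) \<Rightarrow> 'e set \<Rightarrow> ('v \<times> 'v) set" where
  "conn_rel V ends A = Id_on V \<union> (adj_rel ends A)\<^sup>+"

definition num_comp :: "'v set \<Rightarrow> ('e \<Rightarrow> 'v set) \<Rightarrow> 'e set \<Rightarrow> nat" where
  "num_comp V ends A = card (V // conn_rel V ends A)"

definition mono_edges :: "'e set \<Rightarrow> ('e \<Rightarrow> 'v set) \<Rightarrow> ('v \<Rightarrow> nat) \<Rightarrow> 'e set" where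
  "mono_edges E ends \<sigma> = {e\<in>E. \<exists>c. \<forall>v\<in>ends e. \<sigma> v = c}"

definition SW_RC :: "'v set \<Rightarrow> 'e set \<Rightarrow> ('e \<Rightarrow> 'v set) \<Rightarrow> real \<Rightarrow> nat \<Rightarrow> 'e set \<Rightarrow> 'e set \<Rightarrow> real" where
  "SW_RC V E ends p q A B =
     (1 / real q ^ num_comp V ends A) * (p / (1 - p)) ^ card B *
     (\<Sum>\<sigma>\<in>(V \<rightarrow>\<^sub>E {1..q}).
        (1 - p) ^ card (mono_edges E ends \<sigma>) *
        (if A \<union> B \<subseteq> mono_edges E ends \<sigma> then 1 else 0))"

definition is_eigenvalue :: "'s set \<Rightarrow> ('s \<Rightarrow> 's \<Rightarrow> real) \<Rightarrow> complex \<Rightarrow> bool" where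
  "is_eigenvalue S P \<xi> \<longleftrightarrow>
     (\<exists>f :: 's \<Rightarrow> complex. (\<exists>x\<in>S. f x \<noteq> 0) \<and>
        (\<forall>x\<in>S. (\<Sum>y\<in>S. complex_of_real (P x y) * f y) = \<xi> * f x))"

text \<open>Spectral gap 1 - max{|xi| : xi eigenvalue, xi \<noteq> 1} (convention: max of the empty set is 0).\<close>

definition spectral_gap :: "'s set \<Rightarrow> ('s \<Rightarrow> 's \<Rightarrow> real) \<Rightarrow> real" where
  "spectral_gap S P = 1 - Max (insert 0 {cmod \<xi> | \<xi>. is_eigenvalue S P \<xi> \<and> \<xi> \<noteq> 1})"

end

theory Submission
  imports Defs "Jordan_Normal_Form.Spectral_Radius"
begin

lemma finite_eigs:
  fixes S :: "'s set" and P :: "'s \<Rightarrow> 's \<Rightarrow> real"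
  assumes "finite S"
  shows "finite {\<xi>. is_eigenvalue S P \<xi>}"
proof -
  obtain xs where xs: "distinct xs" "set xs = S" using finite_distinct_list[OF assms] by blast
  define n where "n = length xs"
  have bij: "bij_betw ((!) xs) {..<n} S" using bij_betw_nth[OF xs(1) _ ] xs(2) n_def by auto
  define A :: "complex mat" where "A = mat n n (\<lambda>(i,j). complex_of_real (P (xs!i) (xs!j)))"
  have A: "A \<in> carrier_mat n n" unfolding A_def by auto
  have "{\<xi>. is_eigenvalue S P \<xi>} \<subseteq> spectrum A"
  proof
    fix \<xi> assume "\<xi> \<in> {\<xi>. is_eigenvalue S P \<xi>}"
    then obtain f where f1: "\<exists>x\<in>S. f x \<noteq> 0"
      and f2: "\<forall>x\<in>S. (\<Sum>y\<in>S. complex_of_real (P x y) * f y) = \<xi> * f x"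
      unfolding is_eigenvalue_def by auto
    define v where "v = vec n (\<lambda>i. f (xs!i))"
    have vc: "v \<in> carrier_vec n" unfolding v_def by auto
    from f1 obtain x where x: "x \<in> S" "f x \<noteq> 0" by auto
    then obtain i where i: "i < n" "xs!i = x" using bij unfolding bij_betw_def by auto
    have "v \<noteq> 0\<^sub>v n"
    proof
      assume "v = 0\<^sub>v n"
      then have "v $ i = 0" using i by auto
      then show False using i x unfolding v_def by auto
    qed
    moreover have "A *\<^sub>v v = \<xi> \<cdot>\<^sub>v v"
    proof (rule eq_vecI)
      fix i assume i: "i < dim_vec (\<xi> \<cdot>\<^sub>v v)"
      then have i': "i < n" unfolding v_def by auto
      have "(A *\<^sub>v v) $ i = (\<Sum>j<n. complex_of_real (P (xs!i) (xs!j)) * f (xs!j))"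
        using i' unfolding A_def v_def by (auto simp: mult_mat_vec_def scalar_prod_def lessThan_atLeast0 intro!: sum.cong)
      also have "\<dots> = (\<Sum>y\<in>S. complex_of_real (P (xs!i) y) * f y)"
        by (rule sum.reindex_bij_betw[OF bij])
      also have "\<dots> = \<xi> * f (xs!i)" using f2 i' bij unfolding bij_betw_def by auto
      finally show "(A *\<^sub>v v) $ i = (\<xi> \<cdot>\<^sub>v v) $ i" using i' unfolding v_def by simp
    qed (auto simp: A_def v_def)
    ultimately have "eigenvalue A \<xi>" unfolding eigenvalue_def eigenvector_def using vc A by auto
    then show "\<xi> \<in> spectrum A" unfolding spectrum_def by auto
  qed
  then show ?thesis using card_finite_spectrum(1)[OF A] finite_subset by blast
qed

lemma conn_rel_equiv:
  assumes "\<forall>e\<in>A. ends e \<subseteq> V"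
  shows "equiv V (conn_rel V ends A)"
proof -
  have adjV: "adj_rel ends A \<subseteq> V \<times> V" using assms unfolding adj_rel_def by auto
  then have tV: "(adj_rel ends A)\<^sup>+ \<subseteq> V \<times> V" using trancl_subset_Sigma by blast
  have sym: "sym (adj_rel ends A)" unfolding adj_rel_def sym_def by auto
  show ?thesis unfolding equiv_def conn_rel_def
  proof (intro conjI)
    show "refl_on V (Id_on V \<union> (adj_rel ends A)\<^sup>+)" using tV unfolding refl_on_def by auto
    show "Id_on V \<union> (adj_rel ends A)\<^sup>+ \<subseteq> V \<times> V" using tV by auto
    have st: "sym ((adj_rel ends A)\<^sup>+)" using sym_trancl[OF sym] .
    show "sym (Id_on V \<union> (adj_rel ends A)\<^sup>+)"
    proof (rule symI)
      fix a b assume "(a,b) \<in> Id_on V \<union> (adj_rel ends A)\<^sup>+"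
      then show "(b,a) \<in> Id_on V \<union> (adj_rel ends A)\<^sup>+"
      proof
        assume "(a,b) \<in> (adj_rel ends A)\<^sup>+"
        then have "(b,a) \<in> (adj_rel ends A)\<^sup>+" using st by (rule symD[rotated])
        then show ?thesis by blast
      qed auto
    qed
    show "trans (Id_on V \<union> (adj_rel ends A)\<^sup>+)"
    proof (rule transI)
      fix a b c assume ab: "(a,b) \<in> Id_on V \<union> (adj_rel ends A)\<^sup>+"
        and bc: "(b,c) \<in> Id_on V \<union> (adj_rel ends A)\<^sup>+"
      show "(a,c) \<in> Id_on V \<union> (adj_rel ends A)\<^sup>+"
      proof (cases "(a,b) \<in> Id_on V")
        case True then show ?thesis using bc by auto
      next
        case False
        then have ab': "(a,b) \<in> (adj_rel ends A)\<^sup>+" using ab by auto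
        show ?thesis
        proof (cases "(b,c) \<in> Id_on V")
          case True then show ?thesis using ab' by auto
        next
          case False
          then have "(b,c) \<in> (adj_rel ends A)\<^sup>+" using bc by auto
          then show ?thesis using ab' by (meson UnI2 trancl_trans)
        qed
      qed
    qed
  qed
qed

lemma conn_rel_const:
  assumes "\<forall>e\<in>A. \<exists>c. \<forall>v\<in>ends e. \<sigma> v = c" and "(u,v) \<in> conn_rel V ends A"
  shows "\<sigma> u = \<sigma> v"
proof -
  have adj: "\<sigma> a = \<sigma> b" if h: "(a,b) \<in> adj_rel ends A" for a b
  proof -
    obtain e where e: "e \<in> A" "a \<in> ends e" "b \<in> ends e" using h by (auto simp: adj_rel_def)
    obtain c where "\<forall>v\<in>ends e. \<sigma> v = c" using assms(1) e(1) by blast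
    then show ?thesis using e by simp
  qed
  have "\<sigma> a = \<sigma> b" if "(a,b) \<in> (adj_rel ends A)\<^sup>+" for a b
    using that
  proof (induction rule: trancl_induct)
    case (base y) then show ?case by (rule adj)
  next
    case (step y z) then show ?case using adj[OF step(2)] by simp
  qed
  then show ?thesis using assms(2) unfolding conn_rel_def by auto
qed

lemma const_conn_rel:
  assumes "\<forall>u v. (u,v) \<in> conn_rel V ends A \<longrightarrow> \<sigma> u = \<sigma> v" and "e \<in> A"
  shows "\<exists>c. \<forall>v\<in>ends e. \<sigma> v = c"
proof (cases "ends e = {}")
  case True then show ?thesis by auto
next
  case False
  then obtain u where u: "u \<in> ends e" by auto
  have "\<forall>v\<in>ends e. \<sigma> v = \<sigma> u"
  proof
    fix v assume "v \<in> ends e"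
    then have "(v,u) \<in> adj_rel ends A" using u assms(2) unfolding adj_rel_def by auto
    then have "(v,u) \<in> conn_rel V ends A" unfolding conn_rel_def by auto
    then show "\<sigma> v = \<sigma> u" using assms(1) by auto
  qed
  then show ?thesis by auto
qed

lemma count_colorings:
  fixes V :: "'v set" and E :: "'e set" and q :: nat
  assumes V: "finite V" and AE: "A \<subseteq> E" and ends: "\<forall>e\<in>E. ends e \<subseteq> V"
  shows "card {\<sigma> \<in> V \<rightarrow>\<^sub>E {1..q}. A \<subseteq> mono_edges E ends \<sigma>} = q ^ num_comp V ends A"
proof -
  define R where "R = conn_rel V ends A"
  have eq: "equiv V R" unfolding R_def by (rule conn_rel_equiv) (use ends AE in blast)
  have C: "{\<sigma> \<in> V \<rightarrow>\<^sub>E {1..q}. A \<subseteq> mono_edges E ends \<sigma>}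
        = {\<sigma> \<in> V \<rightarrow>\<^sub>E {1..q}. \<forall>u v. (u,v) \<in> R \<longrightarrow> \<sigma> u = \<sigma> v}"
  proof (intro Collect_cong conj_cong refl)
    fix \<sigma> assume "\<sigma> \<in> V \<rightarrow>\<^sub>E {1..q}"
    show "(A \<subseteq> mono_edges E ends \<sigma>) = (\<forall>u v. (u,v) \<in> R \<longrightarrow> \<sigma> u = \<sigma> v)"
    proof
      assume "A \<subseteq> mono_edges E ends \<sigma>"
      then have "\<forall>e\<in>A. \<exists>c. \<forall>v\<in>ends e. \<sigma> v = c" unfolding mono_edges_def by blast
      then show "\<forall>u v. (u,v) \<in> R \<longrightarrow> \<sigma> u = \<sigma> v" unfolding R_def using conn_rel_const[of A ends \<sigma>] by blast
    next
      assume "\<forall>u v. (u,v) \<in> R \<longrightarrow> \<sigma> u = \<sigma> v"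
      then have "\<exists>c. \<forall>v\<in>ends e. \<sigma> v = c" if "e \<in> A" for e
        using const_conn_rel[OF _ that] unfolding R_def by blast
      then show "A \<subseteq> mono_edges E ends \<sigma>" using AE unfolding mono_edges_def by blast
    qed
  qed
  define \<Psi> where "\<Psi> = (\<lambda>g::'v set \<Rightarrow> nat. \<lambda>v\<in>V. g (R``{v}))"
  have "bij_betw \<Psi> (V//R \<rightarrow>\<^sub>E {1..q}) {\<sigma> \<in> V \<rightarrow>\<^sub>E {1..q}. \<forall>u v. (u,v) \<in> R \<longrightarrow> \<sigma> u = \<sigma> v}"
  proof (rule bij_betwI')
    fix g h assume g: "g \<in> V//R \<rightarrow>\<^sub>E {1..q}" and h: "h \<in> V//R \<rightarrow>\<^sub>E {1..q}"
    show "(\<Psi> g = \<Psi> h) = (g = h)"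
    proof
      assume a: "\<Psi> g = \<Psi> h"
      show "g = h"
      proof (rule extensionalityI[where A="V//R"])
        show "g \<in> extensional (V//R)" "h \<in> extensional (V//R)" using g h by (auto simp: PiE_iff)
      next
        fix X assume "X \<in> V//R"
        then obtain v where v: "v \<in> V" "X = R``{v}" by (auto elim: quotientE)
        then show "g X = h X" using fun_cong[OF a, of v] unfolding \<Psi>_def by auto
      qed
    qed auto
  next
    fix g assume g: "g \<in> V//R \<rightarrow>\<^sub>E {1..q}"
    have "\<Psi> g \<in> V \<rightarrow>\<^sub>E {1..q}" using g unfolding \<Psi>_def by (auto intro: quotientI)
    moreover have "\<Psi> g u = \<Psi> g v" if "(u,v) \<in> R" for u v
    proof -
      have uv: "u \<in> V" "v \<in> V" using that equiv_type[OF eq] by auto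
      have "R``{u} = R``{v}" using that eq by (simp add: equiv_class_eq)
      then show ?thesis using uv unfolding \<Psi>_def by auto
    qed
    ultimately show "\<Psi> g \<in> {\<sigma> \<in> V \<rightarrow>\<^sub>E {1..q}. \<forall>u v. (u,v) \<in> R \<longrightarrow> \<sigma> u = \<sigma> v}" by auto
  next
    fix \<sigma> assume s: "\<sigma> \<in> {\<sigma> \<in> V \<rightarrow>\<^sub>E {1..q}. \<forall>u v. (u,v) \<in> R \<longrightarrow> \<sigma> u = \<sigma> v}"
    define g where "g = (\<lambda>X\<in>V//R. \<sigma> (SOME v. v \<in> X))"
    have "g \<in> V//R \<rightarrow>\<^sub>E {1..q}"
    proof
      fix X assume "X \<in> V//R"
      then obtain v where v: "v \<in> V" "X = R``{v}" by (auto elim: quotientE)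
      then have "v \<in> X" using equiv_class_self[OF eq] by simp
      then have "(SOME v. v \<in> X) \<in> X" by (rule someI)
      then have "(SOME v. v \<in> X) \<in> V" using v equiv_type[OF eq] by auto
      then show "g X \<in> {1..q}" using s \<open>X \<in> V//R\<close> unfolding g_def by auto
    qed (auto simp: g_def)
    moreover have "\<Psi> g = \<sigma>"
    proof
      fix v show "\<Psi> g v = \<sigma> v"
      proof (cases "v \<in> V")
        case True
        have X: "R``{v} \<in> V//R" using True by (rule quotientI)
        have "v \<in> R``{v}" using equiv_class_self[OF eq True] .
        then have "(SOME u. u \<in> R``{v}) \<in> R``{v}" by (rule someI)
        then have "(v, SOME u. u \<in> R``{v}) \<in> R" by auto
        then have "\<sigma> (SOME u. u \<in> R``{v}) = \<sigma> v" using s by auto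
        then show ?thesis using True X unfolding \<Psi>_def g_def by auto
      next
        case False then show ?thesis using s unfolding \<Psi>_def by auto
      qed
    qed
    ultimately show "\<exists>g \<in> V//R \<rightarrow>\<^sub>E {1..q}. \<sigma> = \<Psi> g" by auto
  qed
  then have "card (V//R \<rightarrow>\<^sub>E {1..q}) = card {\<sigma> \<in> V \<rightarrow>\<^sub>E {1..q}. \<forall>u v. (u,v) \<in> R \<longrightarrow> \<sigma> u = \<sigma> v}"
    by (rule bij_betw_same_card)
  moreover have "finite (V//R)" using V by (rule finite_quotient[OF _ equiv_type[OF eq]])
  then have "card (V//R \<rightarrow>\<^sub>E {1..q}) = q ^ card (V//R)"
    by (simp add: card_PiE)
  ultimately show ?thesis unfolding C num_comp_def R_def by simp
qed

lemma fiber_card: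
  assumes X: "finite X" and fY: "f ` X \<subseteq> Y" and Y: "finite Y" and K: "finite K"
    and inj: "\<And>x0. x0 \<in> X \<Longrightarrow> \<exists>g. inj_on g {x\<in>X. f x = f x0} \<and> g ` {x\<in>X. f x = f x0} \<subseteq> K"
  shows "card X \<le> card Y * card K"
proof -
  have "X \<subseteq> (\<Union>y\<in>f ` X. {x\<in>X. f x = y})" by auto
  then have "card X \<le> card (\<Union>y\<in>f ` X. {x\<in>X. f x = y})"
    by (rule card_mono[rotated]) (use X in auto)
  also have "\<dots> \<le> (\<Sum>y\<in>f ` X. card {x\<in>X. f x = y})"
    by (rule card_UN_le) (use X in auto)
  also have "\<dots> \<le> (\<Sum>y\<in>f ` X. card K)"
  proof (rule sum_mono)
    fix y assume "y \<in> f ` X"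
    then obtain x0 where x0: "x0 \<in> X" "y = f x0" by auto
    obtain g where g: "inj_on g {x\<in>X. f x = f x0}" "g ` {x\<in>X. f x = f x0} \<subseteq> K"
      using inj[OF x0(1)] by blast
    show "card {x\<in>X. f x = y} \<le> card K"
      using card_inj_on_le[OF g K] x0(2) by simp
  qed
  also have "\<dots> = card (f ` X) * card K" by simp
  also have "\<dots> \<le> card Y * card K"
    using card_mono[OF Y fY] by simp
  finally show ?thesis .
qed

definition csub :: "nat \<Rightarrow> nat \<Rightarrow> nat \<Rightarrow> nat" where
  "csub q a b = nat ((int a - int b) mod int q) + 1"

lemma csub_range: "1 \<le> q \<Longrightarrow> csub q a b \<in> {1..q}"
proof -
  assume q: "1 \<le> q"
  have "(int a - int b) mod int q < int q" using q by simp
  moreover have "0 \<le> (int a - int b) mod int q" using q by simp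
  ultimately show ?thesis unfolding csub_def by auto
qed

lemma csub_eq_iff: "1 \<le> q \<Longrightarrow> csub q a b = csub q c d \<longleftrightarrow> (int a - int b) mod int q = (int c - int d) mod int q"
  unfolding csub_def by (auto simp: nat_eq_iff2)

lemma csub_key:
  assumes q: "1 \<le> q" and h: "csub q a b = csub q a0 b0"
  shows "csub q a a0 = csub q b b0"
proof -
  have "(int a - int b) mod int q = (int a0 - int b0) mod int q" using h csub_eq_iff[OF q] by blast
  then have "int q dvd (int a - int b) - (int a0 - int b0)" by (simp add: mod_eq_dvd_iff)
  moreover have "(int a - int b) - (int a0 - int b0) = (int a - int a0) - (int b - int b0)" by simp
  ultimately have "int q dvd (int a - int a0) - (int b - int b0)" by simp
  then have "(int a - int a0) mod int q = (int b - int b0) mod int q" by (simp add: mod_eq_dvd_iff)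
  then show ?thesis using csub_eq_iff[OF q] by blast
qed

lemma csub_inj:
  assumes q: "1 \<le> q" and a: "a \<in> {1..q}" and a': "a' \<in> {1..q}" and h: "csub q a b = csub q a' b"
  shows "a = a'"
proof -
  have "(int a - int b) mod int q = (int a' - int b) mod int q" using h csub_eq_iff[OF q] by blast
  then have "int q dvd (int a - int b) - (int a' - int b)" by (simp add: mod_eq_dvd_iff)
  then have d: "int q dvd (int a - 1) - (int a' - 1)" by simp
  have "(int a - 1) mod int q = (int a' - 1) mod int q" using d by (simp add: mod_eq_dvd_iff)
  moreover have "(int a - 1) mod int q = int a - 1" using a by (intro mod_pos_pos_trivial) auto
  moreover have "(int a' - 1) mod int q = int a' - 1" using a' by (intro mod_pos_pos_trivial) auto
  ultimately show ?thesis by simp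
qed

definition subc :: "'v set \<Rightarrow> nat \<Rightarrow> ('v \<Rightarrow> nat) \<Rightarrow> ('v \<Rightarrow> nat) \<Rightarrow> 'v \<Rightarrow> nat" where
  "subc V q \<sigma> \<tau> = (\<lambda>v\<in>V. csub q (\<sigma> v) (\<tau> v))"

lemma subc_col: assumes q: "1 \<le> q" shows "subc V q \<sigma> \<tau> \<in> V \<rightarrow>\<^sub>E {1..q}"
proof -
  have "\<forall>v\<in>V. csub q (\<sigma> v) (\<tau> v) \<in> {1..q}" using csub_range[OF q] by blast
  then show ?thesis unfolding subc_def by (rule restrict_PiE_iff[THEN iffD2])
qed

lemma subc_mono:
  assumes ends: "\<forall>e\<in>E. ends e \<subseteq> V" and F: "F \<subseteq> mono_edges E ends \<sigma>" "F \<subseteq> mono_edges E ends \<tau>"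
  shows "F \<subseteq> mono_edges E ends (subc V q \<sigma> \<tau>)"
proof
  fix e assume e: "e \<in> F"
  then have eE: "e \<in> E" using F unfolding mono_edges_def by auto
  obtain c where c: "\<forall>v\<in>ends e. \<sigma> v = c" using F e unfolding mono_edges_def by blast
  obtain d where d: "\<forall>v\<in>ends e. \<tau> v = d" using F e unfolding mono_edges_def by blast
  have "\<forall>v\<in>ends e. subc V q \<sigma> \<tau> v = csub q c d" using c d ends eE unfolding subc_def by auto
  then show "e \<in> mono_edges E ends (subc V q \<sigma> \<tau>)" using eE unfolding mono_edges_def by blast
qed

lemma subc_inj:
  assumes q: "1 \<le> q" and s: "\<sigma> \<in> V \<rightarrow>\<^sub>E {1..q}" "\<sigma>' \<in> V \<rightarrow>\<^sub>E {1..q}"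
    and h: "subc V q \<sigma> \<tau> = subc V q \<sigma>' \<tau>"
  shows "\<sigma> = \<sigma>'"
proof
  fix v show "\<sigma> v = \<sigma>' v"
  proof (cases "v \<in> V")
    case True
    have e1: "subc V q \<sigma> \<tau> v = csub q (\<sigma> v) (\<tau> v)" using True by (simp add: subc_def)
    have e2: "subc V q \<sigma>' \<tau> v = csub q (\<sigma>' v) (\<tau> v)" using True by (simp add: subc_def)
    have eq: "csub q (\<sigma> v) (\<tau> v) = csub q (\<sigma>' v) (\<tau> v)" using e1 e2 h by metis
    have a: "\<sigma> v \<in> {1..q}" using s(1) True by (rule PiE_mem)
    have a': "\<sigma>' v \<in> {1..q}" using s(2) True by (rule PiE_mem)
    show ?thesis by (rule csub_inj[OF q a a' eq])
  next
    case False then show ?thesis using PiE_arb[OF s(1) False] PiE_arb[OF s(2) False] by simp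
  qed
qed

definition colset :: "'v set \<Rightarrow> 'e set \<Rightarrow> ('e \<Rightarrow> 'v set) \<Rightarrow> nat \<Rightarrow> 'e set \<Rightarrow> ('v \<Rightarrow> nat) set" where
  "colset V E ends q F = {\<sigma> \<in> V \<rightarrow>\<^sub>E {1..q}. F \<subseteq> mono_edges E ends \<sigma>}"

lemma finite_colset: "finite V \<Longrightarrow> finite (colset V E ends q F)"
  unfolding colset_def by (rule finite_subset[of _ "V \<rightarrow>\<^sub>E {1..q}"]) (auto intro!: finite_PiE)

lemma colset_anti: "F \<subseteq> G \<Longrightarrow> colset V E ends q G \<subseteq> colset V E ends q F"
  unfolding colset_def by auto

lemma colset_add_edge:
  assumes V: "finite V" and q: "1 \<le> q" and ends: "\<forall>e\<in>E. ends e \<subseteq> V \<and> ends e \<noteq> {} \<and> card (ends e) \<le> 2"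
    and e: "e \<in> E"
  shows "card (colset V E ends q F) \<le> q * card (colset V E ends q (insert e F))"
proof -
  have ee: "ends e \<subseteq> V" "ends e \<noteq> {}" "card (ends e) \<le> 2" using ends e by auto
  obtain u v where uv: "ends e \<subseteq> {u,v}" "u \<in> ends e" "v \<in> ends e"
  proof -
    obtain u where u: "u \<in> ends e" using ee by auto
    show ?thesis
    proof (cases "ends e \<subseteq> {u}")
      case True then show ?thesis using that[of u u] u by auto
    next
      case False
      then obtain v where v: "v \<in> ends e" "v \<noteq> u" by auto
      have fin: "finite (ends e)" using ee(1) V finite_subset by blast
      have "ends e \<subseteq> {u,v}"
      proof (rule ccontr)
        assume "\<not> ends e \<subseteq> {u,v}"
        then obtain w where w: "w \<in> ends e" "w \<noteq> u" "w \<noteq> v" by auto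
        have "{u,v,w} \<subseteq> ends e" using u v w by auto
        then have "card {u,v,w} \<le> card (ends e)" using fin by (rule card_mono[rotated])
        then show False using ee(3) v w by auto
      qed
      then show ?thesis using that u v by blast
    qed
  qed
  have uvV: "u \<in> V" "v \<in> V" using uv ee by auto
  let ?X = "colset V E ends q F"
  let ?f = "\<lambda>\<sigma>. csub q (\<sigma> u) (\<sigma> v)"
  have "card ?X \<le> card {1..q} * card (colset V E ends q (insert e F))"
  proof (rule fiber_card[where f = ?f])
    show "finite ?X" using finite_colset[OF V] .
    show "?f ` ?X \<subseteq> {1..q}" using csub_range[OF q] by auto
    show "finite (colset V E ends q (insert e F))" using finite_colset[OF V] .
    show "finite {1..q}" by simp
  next
    fix \<sigma>0 assume s0: "\<sigma>0 \<in> ?X"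
    let ?g = "\<lambda>\<sigma>. subc V q \<sigma> \<sigma>0"
    have "inj_on ?g {\<sigma> \<in> ?X. ?f \<sigma> = ?f \<sigma>0}"
      by (rule inj_onI) (use subc_inj[OF q] in \<open>auto simp: colset_def\<close>)
    moreover have "?g ` {\<sigma> \<in> ?X. ?f \<sigma> = ?f \<sigma>0} \<subseteq> colset V E ends q (insert e F)"
    proof
      fix \<tau> assume "\<tau> \<in> ?g ` {\<sigma> \<in> ?X. ?f \<sigma> = ?f \<sigma>0}"
      then obtain \<sigma> where s: "\<sigma> \<in> ?X" "?f \<sigma> = ?f \<sigma>0" and t: "\<tau> = ?g \<sigma>" by auto
      have Fm: "F \<subseteq> mono_edges E ends \<tau>" unfolding t
        by (rule subc_mono) (use ends s s0 in \<open>auto simp: colset_def\<close>)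
      have key: "csub q (\<sigma> u) (\<sigma>0 u) = csub q (\<sigma> v) (\<sigma>0 v)" using csub_key[OF q s(2)] .
      have "\<forall>w\<in>ends e. \<tau> w = csub q (\<sigma> u) (\<sigma>0 u)"
      proof
        fix w assume "w \<in> ends e"
        then have "w = u \<or> w = v" "w \<in> V" using uv ee by auto
        then show "\<tau> w = csub q (\<sigma> u) (\<sigma>0 u)" using key unfolding t subc_def by auto
      qed
      then have "e \<in> mono_edges E ends \<tau>" using e unfolding mono_edges_def by blast
      moreover have "\<tau> \<in> V \<rightarrow>\<^sub>E {1..q}" unfolding t by (rule subc_col[OF q])
      ultimately show "\<tau> \<in> colset V E ends q (insert e F)" using Fm unfolding colset_def by auto
    qed
    ultimately show "\<exists>g. inj_on g {\<sigma> \<in> ?X. ?f \<sigma> = ?f \<sigma>0} \<and> g ` {\<sigma> \<in> ?X. ?f \<sigma> = ?f \<sigma>0} \<subseteq> colset V E ends q (insert e F)"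
      by blast
  qed
  then show ?thesis by simp
qed

lemma colset_swap:
  fixes V :: "'v set" and E :: "'e set"
  assumes V: "finite V" and q: "1 \<le> q" and ends: "\<forall>e\<in>E. ends e \<subseteq> V"
    and AE: "A \<subseteq> E" and BE: "B \<subseteq> E" and XE: "X \<subseteq> E"
  shows "card (colset V E ends q A) * card (colset V E ends q B)
     \<le> q ^ card ((\<Union>e\<in>X. ends e) \<inter> (\<Union>e\<in>E - X. ends e))
        * (card (colset V E ends q ((B \<inter> X) \<union> (A - X))) * card (colset V E ends q ((A \<inter> X) \<union> (B - X))))"
proof -
  define VX where "VX = (\<Union>e\<in>X. ends e)"
  define VY where "VY = (\<Union>e\<in>E - X. ends e)"
  define D where "D = VX \<inter> VY"
  define CA where "CA = colset V E ends q A"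
  define CB where "CB = colset V E ends q B"
  define CS where "CS = colset V E ends q ((B \<inter> X) \<union> (A - X))"
  define CT where "CT = colset V E ends q ((A \<inter> X) \<union> (B - X))"
  have VXV: "VX \<subseteq> V" using ends XE unfolding VX_def by auto
  have DV: "D \<subseteq> V" using VXV unfolding D_def by auto
  have finD: "finite D" using V DV finite_subset by blast
  have finCA: "finite CA" "finite CB" "finite CS" "finite CT"
    unfolding CA_def CB_def CS_def CT_def using finite_colset[OF V] by auto
  define K where "K = {st \<in> CA \<times> CB. \<forall>v\<in>D. fst st v = snd st v}"
  define f where "f = (\<lambda>st. restrict (\<lambda>v. csub q (fst st v) (snd st v)) D)"
  have step1: "card (CA \<times> CB) \<le> card (D \<rightarrow>\<^sub>E {1..q}) * card K"
  proof (rule fiber_card[where f = f])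
    show "finite (CA \<times> CB)" using finCA by auto
    show "finite (D \<rightarrow>\<^sub>E {1..q})" using finD by (auto intro!: finite_PiE)
    show "finite K" unfolding K_def using finCA by auto
    show "f ` (CA \<times> CB) \<subseteq> D \<rightarrow>\<^sub>E {1..q}"
    proof
      fix y assume "y \<in> f ` (CA \<times> CB)"
      then obtain st where y: "y = f st" by auto
      have "\<forall>v\<in>D. csub q (fst st v) (snd st v) \<in> {1..q}" using csub_range[OF q] by blast
      then show "y \<in> D \<rightarrow>\<^sub>E {1..q}" unfolding y f_def by (rule restrict_PiE_iff[THEN iffD2])
    qed
  next
    fix st0 assume st0: "st0 \<in> CA \<times> CB"
    obtain \<sigma>0 \<tau>0 where st0e: "st0 = (\<sigma>0, \<tau>0)" by (cases st0)
    have s0: "\<sigma>0 \<in> CA" "\<tau>0 \<in> CB" using st0 st0e by auto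
    define g where "g = (\<lambda>st. (subc V q (fst st) \<sigma>0, subc V q (snd st) \<tau>0))"
    have "inj_on g {st \<in> CA \<times> CB. f st = f st0}"
    proof (rule inj_onI)
      fix st st' assume a: "st \<in> {st \<in> CA \<times> CB. f st = f st0}" "st' \<in> {st \<in> CA \<times> CB. f st = f st0}"
        and e: "g st = g st'"
      have m: "fst st \<in> V \<rightarrow>\<^sub>E {1..q}" "fst st' \<in> V \<rightarrow>\<^sub>E {1..q}"
          "snd st \<in> V \<rightarrow>\<^sub>E {1..q}" "snd st' \<in> V \<rightarrow>\<^sub>E {1..q}"
        using a unfolding CA_def CB_def colset_def by auto
      have e1: "subc V q (fst st) \<sigma>0 = subc V q (fst st') \<sigma>0" using e unfolding g_def by simp
      have e2: "subc V q (snd st) \<tau>0 = subc V q (snd st') \<tau>0" using e unfolding g_def by simp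
      have "fst st = fst st'" by (rule subc_inj[OF q m(1) m(2) e1])
      moreover have "snd st = snd st'" by (rule subc_inj[OF q m(3) m(4) e2])
      ultimately show "st = st'" by (simp add: prod_eq_iff)
    qed
    moreover have "g ` {st \<in> CA \<times> CB. f st = f st0} \<subseteq> K"
    proof
      fix y assume "y \<in> g ` {st \<in> CA \<times> CB. f st = f st0}"
      then obtain st where st: "st \<in> CA \<times> CB" "f st = f st0" and y: "y = g st" by auto
      have c1: "subc V q (fst st) \<sigma>0 \<in> CA"
        unfolding CA_def colset_def
      proof (intro CollectI conjI)
        show "subc V q (fst st) \<sigma>0 \<in> V \<rightarrow>\<^sub>E {1..q}" by (rule subc_col[OF q])
        show "A \<subseteq> mono_edges E ends (subc V q (fst st) \<sigma>0)"
          by (rule subc_mono) (use ends st s0 in \<open>auto simp: CA_def colset_def\<close>)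
      qed
      have c2: "subc V q (snd st) \<tau>0 \<in> CB"
        unfolding CB_def colset_def
      proof (intro CollectI conjI)
        show "subc V q (snd st) \<tau>0 \<in> V \<rightarrow>\<^sub>E {1..q}" by (rule subc_col[OF q])
        show "B \<subseteq> mono_edges E ends (subc V q (snd st) \<tau>0)"
          by (rule subc_mono) (use ends st s0 in \<open>auto simp: CB_def colset_def\<close>)
      qed
      have ag: "subc V q (fst st) \<sigma>0 v = subc V q (snd st) \<tau>0 v" if v: "v \<in> D" for v
      proof -
        have "f st v = f st0 v" using st(2) by simp
        then have "csub q (fst st v) (snd st v) = csub q (\<sigma>0 v) (\<tau>0 v)"
          using v st0e unfolding f_def by simp
        then have "csub q (fst st v) (\<sigma>0 v) = csub q (snd st v) (\<tau>0 v)" by (rule csub_key[OF q])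
        moreover have "v \<in> V" using v DV by auto
        ultimately show ?thesis unfolding subc_def by simp
      qed
      show "y \<in> K" unfolding y K_def g_def using c1 c2 ag by simp
    qed
    ultimately show "\<exists>g. inj_on g {st \<in> CA \<times> CB. f st = f st0} \<and> g ` {st \<in> CA \<times> CB. f st = f st0} \<subseteq> K"
      by blast
  qed
  define h where "h = (\<lambda>st::('v \<Rightarrow> nat) \<times> ('v \<Rightarrow> nat). ((\<lambda>v. if v \<in> VX then snd st v else fst st v),
                              (\<lambda>v. if v \<in> VX then fst st v else snd st v)))"
  have step2: "card K \<le> card (CS \<times> CT)"
  proof (rule card_inj_on_le)
    show "finite (CS \<times> CT)" using finCA by auto
    show "inj_on h K"
    proof (rule inj_onI)
      fix st st' assume "st \<in> K" "st' \<in> K" and e: "h st = h st'"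
      have e1: "\<And>v. (if v \<in> VX then snd st v else fst st v) = (if v \<in> VX then snd st' v else fst st' v)"
        using e unfolding h_def by (simp add: fun_eq_iff)
      have e2: "\<And>v. (if v \<in> VX then fst st v else snd st v) = (if v \<in> VX then fst st' v else snd st' v)"
        using e unfolding h_def by (simp add: fun_eq_iff)
      have "fst st v = fst st' v" for v using e1[of v] e2[of v] by (cases "v \<in> VX") auto
      moreover have "snd st v = snd st' v" for v using e1[of v] e2[of v] by (cases "v \<in> VX") auto
      ultimately show "st = st'" by (simp add: prod_eq_iff fun_eq_iff)
    qed
    show "h ` K \<subseteq> CS \<times> CT"
    proof
      fix y assume "y \<in> h ` K"
      then obtain \<sigma> \<tau> where st: "(\<sigma>,\<tau>) \<in> K" and y: "y = h (\<sigma>,\<tau>)" by auto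
      have sA: "\<sigma> \<in> V \<rightarrow>\<^sub>E {1..q}" "A \<subseteq> mono_edges E ends \<sigma>" using st unfolding K_def CA_def colset_def by auto
      have tB: "\<tau> \<in> V \<rightarrow>\<^sub>E {1..q}" "B \<subseteq> mono_edges E ends \<tau>" using st unfolding K_def CB_def colset_def by auto
      have agr: "\<And>v. v \<in> D \<Longrightarrow> \<sigma> v = \<tau> v" using st unfolding K_def by auto
      define \<sigma>' where "\<sigma>' = (\<lambda>v. if v \<in> VX then \<tau> v else \<sigma> v)"
      define \<tau>' where "\<tau>' = (\<lambda>v. if v \<in> VX then \<sigma> v else \<tau> v)"
      have col1: "\<sigma>' \<in> V \<rightarrow>\<^sub>E {1..q}"
      proof (rule PiE_I)
        fix v assume "v \<in> V" then show "\<sigma>' v \<in> {1..q}" unfolding \<sigma>'_def using PiE_mem[OF sA(1)] PiE_mem[OF tB(1)] by auto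
      next
        fix v assume "v \<notin> V" then show "\<sigma>' v = undefined" unfolding \<sigma>'_def using PiE_arb[OF sA(1)] PiE_arb[OF tB(1)] by auto
      qed
      have col2: "\<tau>' \<in> V \<rightarrow>\<^sub>E {1..q}"
      proof (rule PiE_I)
        fix v assume "v \<in> V" then show "\<tau>' v \<in> {1..q}" unfolding \<tau>'_def using PiE_mem[OF sA(1)] PiE_mem[OF tB(1)] by auto
      next
        fix v assume "v \<notin> V" then show "\<tau>' v = undefined" unfolding \<tau>'_def using PiE_arb[OF sA(1)] PiE_arb[OF tB(1)] by auto
      qed
      have monoX: "\<exists>c. \<forall>v\<in>ends e. (\<lambda>v. if v \<in> VX then \<rho> v else \<rho>' v) v = c"
        if hh: "e \<in> X" "e \<in> R" "R \<subseteq> mono_edges E ends \<rho>" for e R \<rho> \<rho>'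
      proof -
        obtain c where c: "\<forall>v\<in>ends e. \<rho> v = c" using hh unfolding mono_edges_def by blast
        have "ends e \<subseteq> VX" using hh(1) unfolding VX_def by auto
        then show ?thesis using c by (intro exI[of _ c]) auto
      qed
      have monoY: "\<exists>c. \<forall>v\<in>ends e. (\<lambda>v. if v \<in> VX then \<rho>' v else \<rho> v) v = c"
        if hh: "e \<in> E - X" "e \<in> R" "R \<subseteq> mono_edges E ends \<rho>" "\<And>v. v \<in> D \<Longrightarrow> \<rho> v = \<rho>' v" for e R \<rho> \<rho>'
      proof -
        obtain c where c: "\<forall>v\<in>ends e. \<rho> v = c" using hh unfolding mono_edges_def by blast
        have "ends e \<subseteq> VY" using hh(1) unfolding VY_def by auto
        then have "\<forall>v\<in>ends e. v \<in> VX \<longrightarrow> v \<in> D" unfolding D_def by auto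
        then show ?thesis using c hh(4) by (intro exI[of _ c]) fastforce
      qed
      have m1: "(B \<inter> X) \<union> (A - X) \<subseteq> mono_edges E ends \<sigma>'"
      proof
        fix e assume e: "e \<in> (B \<inter> X) \<union> (A - X)"
        then have eE: "e \<in> E" using AE BE by auto
        show "e \<in> mono_edges E ends \<sigma>'"
        proof (cases "e \<in> X")
          case True
          then have "e \<in> B" using e by auto
          then have "\<exists>c. \<forall>v\<in>ends e. \<sigma>' v = c" unfolding \<sigma>'_def using monoX[OF True _ tB(2)] by blast
          then show ?thesis using eE unfolding mono_edges_def by blast
        next
          case False
          then have "e \<in> A" "e \<in> E - X" using e eE by auto
          then have "\<exists>c. \<forall>v\<in>ends e. \<sigma>' v = c" unfolding \<sigma>'_def using monoY[OF _ _ sA(2), of e \<tau>] agr by blast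
          then show ?thesis using eE unfolding mono_edges_def by blast
        qed
      qed
      have m2: "(A \<inter> X) \<union> (B - X) \<subseteq> mono_edges E ends \<tau>'"
      proof
        fix e assume e: "e \<in> (A \<inter> X) \<union> (B - X)"
        then have eE: "e \<in> E" using AE BE by auto
        show "e \<in> mono_edges E ends \<tau>'"
        proof (cases "e \<in> X")
          case True
          then have "e \<in> A" using e by auto
          then have "\<exists>c. \<forall>v\<in>ends e. \<tau>' v = c" unfolding \<tau>'_def using monoX[OF True _ sA(2)] by blast
          then show ?thesis using eE unfolding mono_edges_def by blast
        next
          case False
          then have "e \<in> B" "e \<in> E - X" using e eE by auto
          moreover have "\<And>v. v \<in> D \<Longrightarrow> \<tau> v = \<sigma> v" using agr by simp
          ultimately have "\<exists>c. \<forall>v\<in>ends e. \<tau>' v = c" unfolding \<tau>'_def using monoY[OF _ _ tB(2), of e \<sigma>] by blast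
          then show ?thesis using eE unfolding mono_edges_def by blast
        qed
      qed
      have "\<sigma>' \<in> CS" unfolding CS_def colset_def using col1 m1 by blast
      moreover have "\<tau>' \<in> CT" unfolding CT_def colset_def using col2 m2 by blast
      moreover have "y = (\<sigma>', \<tau>')" unfolding y h_def \<sigma>'_def \<tau>'_def by (simp only: fst_conv snd_conv)
      ultimately show "y \<in> CS \<times> CT" by simp
    qed
  qed
  have cardD: "card (D \<rightarrow>\<^sub>E {1..q}) = q ^ card D" using finD by (simp add: card_PiE)
  have "card CA * card CB = card (CA \<times> CB)" by (simp add: card_cartesian_product)
  also have "\<dots> \<le> q ^ card D * card K" using step1 cardD by simp
  also have "\<dots> \<le> q ^ card D * card (CS \<times> CT)" using step2 by simp
  also have "\<dots> = q ^ card D * (card CS * card CT)" by (simp add: card_cartesian_product)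
  finally show ?thesis unfolding CA_def CB_def CS_def CT_def D_def VX_def VY_def .
qed

lemma sum_Pow_insert:
  assumes "finite T" "e \<notin> T"
  shows "(\<Sum>A\<in>Pow (insert e T). f A) = (\<Sum>A\<in>Pow T. f A + f (insert e A))"
proof -
  have fin: "finite (Pow T)" "finite (insert e ` Pow T)" using assms by auto
  have disj: "Pow T \<inter> insert e ` Pow T = {}" using assms by auto
  have inj: "inj_on (insert e) (Pow T)"
    by (rule inj_onI) (use assms in \<open>auto simp: insert_ident\<close>)
  have "(\<Sum>A\<in>Pow (insert e T). f A) = (\<Sum>A\<in>Pow T. f A) + (\<Sum>A\<in>insert e ` Pow T. f A)"
    unfolding Pow_insert by (rule sum.union_disjoint[OF fin disj])
  also have "(\<Sum>A\<in>insert e ` Pow T. f A) = (\<Sum>A\<in>Pow T. f (insert e A))"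
    by (rule sum.reindex[OF inj, unfolded comp_def])
  finally show ?thesis by (simp add: sum.distrib)
qed

lemma sum_Pow_remove:
  assumes "finite T" "e \<in> T"
  shows "(\<Sum>A\<in>Pow T. f A) = (\<Sum>A\<in>Pow (T - {e}). f A + f (insert e A))"
proof -
  have "T = insert e (T - {e})" using assms by auto
  then have "(\<Sum>A\<in>Pow T. f A) = (\<Sum>A\<in>Pow (insert e (T - {e})). f A)" by simp
  also have "\<dots> = (\<Sum>A\<in>Pow (T - {e}). f A + f (insert e A))"
    by (rule sum_Pow_insert) (use assms in auto)
  finally show ?thesis .
qed

lemma sum_Pow_power:
  fixes r :: real
  assumes "finite T"
  shows "(\<Sum>A\<in>Pow T. r ^ card A) = (1 + r) ^ card T"
  using assms
proof (induction T rule: finite_induct)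
  case empty then show ?case by simp
next
  case (insert x F)
  have "(\<Sum>A\<in>Pow (insert x F). r ^ card A) = (\<Sum>A\<in>Pow F. r ^ card A + r ^ card (insert x A))"
    by (rule sum_Pow_insert) (use insert in auto)
  also have "\<dots> = (\<Sum>A\<in>Pow F. (1 + r) * r ^ card A)"
  proof (rule sum.cong[OF refl])
    fix A assume "A \<in> Pow F"
    then have "card (insert x A) = Suc (card A)" using insert finite_subset by (auto intro!: card_insert_disjoint)
    then show "r ^ card A + r ^ card (insert x A) = (1 + r) * r ^ card A" by (simp add: algebra_simps)
  qed
  also have "\<dots> = (1 + r) * (1 + r) ^ card F" by (simp add: sum_distrib_left[symmetric] insert.IH)
  also have "\<dots> = (1 + r) ^ card (insert x F)" using insert by simp
  finally show ?case .
qed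

lemma sum_Pow_restrict:
  assumes "finite E" "T \<subseteq> E"
  shows "(\<Sum>A\<in>Pow E. if A \<subseteq> T then f A else 0) = (\<Sum>A\<in>Pow T. f A)"
proof -
  have "(\<Sum>A\<in>Pow E. if A \<subseteq> T then f A else 0) = (\<Sum>A\<in>{A \<in> Pow E. A \<subseteq> T}. f A)"
    by (rule sum.inter_filter[symmetric]) (use assms in auto)
  also have "{A \<in> Pow E. A \<subseteq> T} = Pow T" using assms by auto
  finally show ?thesis .
qed

lemma key_alg:
  fixes a r x y :: real assumes a: "a > 0" and r: "r > 0"
  shows "a * x\<^sup>2 + a * r * y\<^sup>2 - (a * x + a * r * y)\<^sup>2 / (a * (1 + r)) = a * r / (1 + r) * (y - x)\<^sup>2"
proof -
  have d: "a * (1 + r) \<noteq> 0" "1 + r \<noteq> 0" using a r by auto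
  have "(a * x\<^sup>2 + a * r * y\<^sup>2) * (a * (1 + r)) - (a * x + a * r * y)\<^sup>2 = a * r * (y - x)\<^sup>2 * a"
    by (simp add: power2_eq_square algebra_simps)
  then show ?thesis using d by (simp add: field_simps)
qed

locale swl =
  fixes V :: "'v set" and E :: "'e set" and ends :: "'e \<Rightarrow> 'v set" and p :: real and q :: nat
  assumes fg: "finite_graph V E ends" and p0: "0 < p" and p1: "p < 1" and q1: "1 \<le> q"
begin

lemma finV: "finite V" and finE: "finite E"
  and endsV: "\<forall>e\<in>E. ends e \<subseteq> V \<and> ends e \<noteq> {} \<and> card (ends e) \<le> 2"
  using fg unfolding finite_graph_def by auto

lemma endsV': "\<forall>e\<in>E. ends e \<subseteq> V" using endsV by auto

definition w :: "'e set \<Rightarrow> real" where "w A = (p / (1 - p)) ^ card A"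
definition mon :: "('v \<Rightarrow> nat) \<Rightarrow> 'e set" where "mon \<sigma> = mono_edges E ends \<sigma>"
definition Col :: "('v \<Rightarrow> nat) set" where "Col = V \<rightarrow>\<^sub>E {1..q}"
definition NN :: "'e set \<Rightarrow> real" where "NN F = real (card (colset V E ends q F))"
definition M :: "'e set \<Rightarrow> real" where "M A = w A * real q ^ num_comp V ends A"
definition Z :: real where "Z = (\<Sum>A\<in>Pow E. M A)"
definition ind :: "bool \<Rightarrow> real" where "ind b = (if b then 1 else 0)"
definition Kf :: "'e set \<Rightarrow> 'e set \<Rightarrow> real" where
  "Kf A B = (\<Sum>\<sigma>\<in>Col. (1 - p) ^ card (mon \<sigma>) * ind (A \<union> B \<subseteq> mon \<sigma>))"

abbreviation P where "P \<equiv> SW_RC V E ends p q"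

lemma finCol: "finite Col" unfolding Col_def using finV by (auto intro!: finite_PiE)
lemma mon_sub: "mon \<sigma> \<subseteq> E" unfolding mon_def mono_edges_def by auto
lemma finmon: "finite (mon \<sigma>)" using finite_subset[OF mon_sub finE] .

lemma w_pos: "w A > 0" unfolding w_def using p0 p1 by simp
lemma w_insert: "finite A \<Longrightarrow> e \<notin> A \<Longrightarrow> w (insert e A) = w A * (p / (1 - p))"
  unfolding w_def by simp

lemma NN_eq: "A \<subseteq> E \<Longrightarrow> NN A = real q ^ num_comp V ends A"
  unfolding NN_def colset_def using count_colorings[OF finV _ endsV'] by simp

lemma M_NN: "A \<subseteq> E \<Longrightarrow> M A = w A * NN A"
  unfolding M_def using NN_eq by simp

lemma M_pos: "M A > 0" unfolding M_def using w_pos q1 by simp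

lemma Z_pos: "Z > 0" unfolding Z_def using M_pos finE by (intro sum_pos) auto

lemma colset_Col: "colset V E ends q F = {\<sigma> \<in> Col. F \<subseteq> mon \<sigma>}"
  unfolding colset_def Col_def mon_def by simp

lemma NN_sum: "NN F = (\<Sum>\<sigma>\<in>Col. ind (F \<subseteq> mon \<sigma>))"
proof -
  have "NN F = real (card {\<sigma> \<in> Col. F \<subseteq> mon \<sigma>})" unfolding NN_def colset_Col ..
  also have "\<dots> = (\<Sum>\<sigma>\<in>{\<sigma> \<in> Col. F \<subseteq> mon \<sigma>}. 1)" by simp
  also have "\<dots> = (\<Sum>\<sigma>\<in>Col. ind (F \<subseteq> mon \<sigma>))"
    unfolding ind_def by (rule sum.inter_filter[OF finCol])
  finally show ?thesis .
qed

lemma P_eq: "P A B = w B * Kf A B / real q ^ num_comp V ends A"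
  unfolding SW_RC_def w_def Kf_def ind_def Col_def mon_def by simp

lemma balance: "M A * P A B = w A * w B * Kf A B"
  unfolding P_eq M_def using q1 by simp

lemma pow_w: "finite T \<Longrightarrow> (\<Sum>B\<in>Pow T. w B) = (1 / (1 - p)) ^ card T"
proof -
  assume "finite T"
  have "(\<Sum>B\<in>Pow T. w B) = (1 + p / (1 - p)) ^ card T" unfolding w_def by (rule sum_Pow_power) fact
  also have "1 + p / (1 - p) = 1 / (1 - p)" using p1 by (simp add: field_simps)
  finally show ?thesis .
qed

lemma pow_w_mon: "(1 - p) ^ card (mon \<sigma>) * (\<Sum>B\<in>Pow (mon \<sigma>). w B) = 1"
  using pow_w[OF finmon] p1 by (simp add: power_one_over field_simps)

lemma row_sum: assumes AE: "A \<subseteq> E" shows "(\<Sum>B\<in>Pow E. P A B) = 1"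
proof -
  define c where "c = real q ^ num_comp V ends A"
  have cpos: "c > 0" unfolding c_def using q1 by simp
  have "(\<Sum>B\<in>Pow E. P A B) = (\<Sum>B\<in>Pow E. w B * Kf A B) / c"
    unfolding P_eq c_def by (simp add: sum_divide_distrib)
  also have "(\<Sum>B\<in>Pow E. w B * Kf A B)
      = (\<Sum>B\<in>Pow E. \<Sum>\<sigma>\<in>Col. (1 - p) ^ card (mon \<sigma>) * ind (A \<subseteq> mon \<sigma>) * (if B \<subseteq> mon \<sigma> then w B else 0))"
    unfolding Kf_def by (auto simp: sum_distrib_left ind_def intro!: sum.cong)
  also have "\<dots> = (\<Sum>\<sigma>\<in>Col. (1 - p) ^ card (mon \<sigma>) * ind (A \<subseteq> mon \<sigma>) * (\<Sum>B\<in>Pow E. if B \<subseteq> mon \<sigma> then w B else 0))"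
    by (simp add: sum.swap[of _ "Pow E"] sum_distrib_left)
  also have "\<dots> = (\<Sum>\<sigma>\<in>Col. ind (A \<subseteq> mon \<sigma>))"
  proof (rule sum.cong[OF refl])
    fix \<sigma> assume "\<sigma> \<in> Col"
    have "(\<Sum>B\<in>Pow E. if B \<subseteq> mon \<sigma> then w B else 0) = (\<Sum>B\<in>Pow (mon \<sigma>). w B)"
      by (rule sum_Pow_restrict[OF finE mon_sub])
    then show "(1 - p) ^ card (mon \<sigma>) * ind (A \<subseteq> mon \<sigma>) * (\<Sum>B\<in>Pow E. if B \<subseteq> mon \<sigma> then w B else 0) = ind (A \<subseteq> mon \<sigma>)"
      using pow_w_mon[of \<sigma>] by (simp add: mult.commute mult.left_commute)
  qed
  also have "\<dots> = NN A" by (simp add: NN_sum)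
  also have "\<dots> = c" unfolding c_def using NN_eq[OF AE] .
  finally show ?thesis using cpos by simp
qed


lemma bilin:
  "(\<Sum>A\<in>Pow E. \<Sum>B\<in>Pow E. M A * P A B * a A * b B)
   = (\<Sum>\<sigma>\<in>Col. (1 - p) ^ card (mon \<sigma>) * (\<Sum>A\<in>Pow (mon \<sigma>). w A * a A) * (\<Sum>B\<in>Pow (mon \<sigma>). w B * b B))"
proof -
  define f where "f = (\<lambda>\<sigma> A. if A \<subseteq> mon \<sigma> then w A * a A else 0)"
  define g where "g = (\<lambda>\<sigma> B. if B \<subseteq> mon \<sigma> then w B * b B else 0)"
  have "(\<Sum>A\<in>Pow E. \<Sum>B\<in>Pow E. M A * P A B * a A * b B)
      = (\<Sum>A\<in>Pow E. \<Sum>B\<in>Pow E. \<Sum>\<sigma>\<in>Col. (1 - p) ^ card (mon \<sigma>) * f \<sigma> A * g \<sigma> B)"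
  proof (intro sum.cong refl)
    fix A B
    have "M A * P A B * a A * b B = (\<Sum>\<sigma>\<in>Col. (1 - p) ^ card (mon \<sigma>) * ind (A \<union> B \<subseteq> mon \<sigma>)) * (w A * a A) * (w B * b B)"
      unfolding balance Kf_def by (simp add: algebra_simps)
    also have "\<dots> = (\<Sum>\<sigma>\<in>Col. (1 - p) ^ card (mon \<sigma>) * f \<sigma> A * g \<sigma> B)"
      unfolding sum_distrib_right by (intro sum.cong refl) (auto simp: f_def g_def ind_def)
    finally show "M A * P A B * a A * b B = (\<Sum>\<sigma>\<in>Col. (1 - p) ^ card (mon \<sigma>) * f \<sigma> A * g \<sigma> B)" .
  qed
  also have "\<dots> = (\<Sum>A\<in>Pow E. \<Sum>\<sigma>\<in>Col. \<Sum>B\<in>Pow E. (1 - p) ^ card (mon \<sigma>) * f \<sigma> A * g \<sigma> B)"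
    by (intro sum.cong refl sum.swap)
  also have "\<dots> = (\<Sum>\<sigma>\<in>Col. \<Sum>A\<in>Pow E. \<Sum>B\<in>Pow E. (1 - p) ^ card (mon \<sigma>) * f \<sigma> A * g \<sigma> B)"
    by (rule sum.swap)
  also have "\<dots> = (\<Sum>\<sigma>\<in>Col. (1 - p) ^ card (mon \<sigma>) * (\<Sum>A\<in>Pow E. f \<sigma> A) * (\<Sum>B\<in>Pow E. g \<sigma> B))"
  proof (rule sum.cong[OF refl])
    fix \<sigma>
    show "(\<Sum>A\<in>Pow E. \<Sum>B\<in>Pow E. (1 - p) ^ card (mon \<sigma>) * f \<sigma> A * g \<sigma> B) = (1 - p) ^ card (mon \<sigma>) * (\<Sum>A\<in>Pow E. f \<sigma> A) * (\<Sum>B\<in>Pow E. g \<sigma> B)"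
    proof -
      have "(1 - p) ^ card (mon \<sigma>) * (\<Sum>A\<in>Pow E. f \<sigma> A) * (\<Sum>B\<in>Pow E. g \<sigma> B)
          = (1 - p) ^ card (mon \<sigma>) * ((\<Sum>A\<in>Pow E. f \<sigma> A) * (\<Sum>B\<in>Pow E. g \<sigma> B))" by (simp only: mult.assoc)
      also have "\<dots> = (1 - p) ^ card (mon \<sigma>) * (\<Sum>A\<in>Pow E. \<Sum>B\<in>Pow E. f \<sigma> A * g \<sigma> B)" by (simp only: sum_product)
      also have "\<dots> = (\<Sum>A\<in>Pow E. \<Sum>B\<in>Pow E. (1 - p) ^ card (mon \<sigma>) * (f \<sigma> A * g \<sigma> B))" by (simp only: sum_distrib_left)
      finally show ?thesis by (simp only: mult.assoc)
    qed
  qed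
  also have "\<dots> = (\<Sum>\<sigma>\<in>Col. (1 - p) ^ card (mon \<sigma>) * (\<Sum>A\<in>Pow (mon \<sigma>). w A * a A) * (\<Sum>B\<in>Pow (mon \<sigma>). w B * b B))"
    unfolding f_def g_def by (simp add: sum_Pow_restrict[OF finE mon_sub])
  finally show ?thesis .
qed

definition Qf :: "('e set \<Rightarrow> real) \<Rightarrow> real" where
  "Qf u = (\<Sum>A\<in>Pow E. \<Sum>B\<in>Pow E. M A * P A B * u A * u B)"
definition S2 :: "('e set \<Rightarrow> real) \<Rightarrow> real" where
  "S2 u = (\<Sum>A\<in>Pow E. M A * (u A)\<^sup>2)"
definition VF :: "'e set \<Rightarrow> ('e set \<Rightarrow> real) \<Rightarrow> real" where
  "VF T u = (\<Sum>B\<in>Pow T. w B) * (\<Sum>A\<in>Pow T. w A * (u A)\<^sup>2) - (\<Sum>A\<in>Pow T. w A * u A)\<^sup>2"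

lemma Qf_form: "Qf u = (\<Sum>\<sigma>\<in>Col. (1 - p) ^ card (mon \<sigma>) * (\<Sum>A\<in>Pow (mon \<sigma>). w A * u A)\<^sup>2)"
  unfolding Qf_def bilin by (simp add: power2_eq_square mult.assoc)

lemma Qf_nonneg: "Qf u \<ge> 0"
  unfolding Qf_form using p1 by (intro sum_nonneg mult_nonneg_nonneg) auto

lemma S2_form: "S2 u = (\<Sum>\<sigma>\<in>Col. (1 - p) ^ card (mon \<sigma>) * (\<Sum>A\<in>Pow (mon \<sigma>). w A * (u A)\<^sup>2) * (\<Sum>B\<in>Pow (mon \<sigma>). w B))"
proof -
  have "S2 u = (\<Sum>A\<in>Pow E. \<Sum>B\<in>Pow E. M A * P A B * (u A)\<^sup>2 * 1)"
    unfolding S2_def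
  proof (rule sum.cong[OF refl])
    fix A assume "A \<in> Pow E"
    then have "(\<Sum>B\<in>Pow E. P A B) = 1" by (intro row_sum) auto
    then show "M A * (u A)\<^sup>2 = (\<Sum>B\<in>Pow E. M A * P A B * (u A)\<^sup>2 * 1)"
      by (simp add: sum_distrib_left[symmetric] sum_distrib_right[symmetric] mult.commute mult.left_commute)
  qed
  also have "\<dots> = (\<Sum>\<sigma>\<in>Col. (1 - p) ^ card (mon \<sigma>) * (\<Sum>A\<in>Pow (mon \<sigma>). w A * (u A)\<^sup>2) * (\<Sum>B\<in>Pow (mon \<sigma>). w B * 1))"
    by (rule bilin)
  finally show ?thesis by simp
qed

lemma Dform: "S2 u - Qf u = (\<Sum>\<sigma>\<in>Col. (1 - p) ^ card (mon \<sigma>) * VF (mon \<sigma>) u)"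
  unfolding S2_form Qf_form VF_def by (simp add: sum_subtractf[symmetric] algebra_simps)


lemma VF_nonneg: assumes "finite T" shows "VF T u \<ge> 0"
proof -
  have "(\<Sum>A\<in>Pow T. sqrt (w A) * (sqrt (w A) * u A))\<^sup>2
      \<le> (\<Sum>A\<in>Pow T. (sqrt (w A))\<^sup>2) * (\<Sum>A\<in>Pow T. (sqrt (w A) * u A)\<^sup>2)"
    by (rule Cauchy_Schwarz_ineq_sum)
  moreover have "\<And>A. sqrt (w A) * (sqrt (w A) * u A) = w A * u A"
    using w_pos by (simp add: mult.assoc[symmetric] less_imp_le)
  moreover have "\<And>A. (sqrt (w A))\<^sup>2 = w A" using w_pos by (simp add: less_imp_le)
  moreover have "\<And>A. (sqrt (w A) * u A)\<^sup>2 = w A * (u A)\<^sup>2" using w_pos by (simp add: power_mult_distrib less_imp_le)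
  ultimately show ?thesis unfolding VF_def by simp
qed

lemma VF_bound:
  assumes T: "finite T" and e: "e \<in> T"
  shows "VF T u \<ge> (\<Sum>B\<in>Pow T. w B) * (\<Sum>A\<in>Pow (T - {e}). p * w A * (u (insert e A) - u A)\<^sup>2)"
proof -
  define r where "r = p / (1 - p)"
  have r: "r > 0" unfolding r_def using p0 p1 by simp
  define s where "s = (\<lambda>A. w A + w (insert e A))"
  define t where "t = (\<lambda>A. w A * u A + w (insert e A) * u (insert e A))"
  define v where "v = (\<lambda>A. w A * (u A)\<^sup>2 + w (insert e A) * (u (insert e A))\<^sup>2)"
  have wi: "w (insert e A) = w A * r" if "A \<in> Pow (T - {e})" for A
    using that w_insert[of A e] finite_subset[OF _ T] unfolding r_def by auto
  have spos: "s A > 0" for A unfolding s_def using w_pos by (simp add: add_pos_pos)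
  have W: "(\<Sum>B\<in>Pow T. w B) = (\<Sum>A\<in>Pow (T - {e}). s A)" unfolding s_def by (rule sum_Pow_remove[OF T e])
  have V2: "(\<Sum>A\<in>Pow T. w A * (u A)\<^sup>2) = (\<Sum>A\<in>Pow (T - {e}). v A)" unfolding v_def by (rule sum_Pow_remove[OF T e])
  have T1: "(\<Sum>A\<in>Pow T. w A * u A) = (\<Sum>A\<in>Pow (T - {e}). t A)" unfolding t_def by (rule sum_Pow_remove[OF T e])
  have CS: "(\<Sum>A\<in>Pow (T - {e}). t A)\<^sup>2 \<le> (\<Sum>A\<in>Pow (T - {e}). s A) * (\<Sum>A\<in>Pow (T - {e}). (t A)\<^sup>2 / s A)"
  proof -
    have "(\<Sum>A\<in>Pow (T - {e}). sqrt (s A) * (t A / sqrt (s A)))\<^sup>2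
        \<le> (\<Sum>A\<in>Pow (T - {e}). (sqrt (s A))\<^sup>2) * (\<Sum>A\<in>Pow (T - {e}). (t A / sqrt (s A))\<^sup>2)"
      by (rule Cauchy_Schwarz_ineq_sum)
    moreover have "\<And>A. sqrt (s A) * (t A / sqrt (s A)) = t A"
    proof -
      fix A have "sqrt (s A) > 0" using spos[of A] by simp
      then show "sqrt (s A) * (t A / sqrt (s A)) = t A" by simp
    qed
    moreover have "\<And>A. (sqrt (s A))\<^sup>2 = s A" using spos by (simp add: less_imp_le)
    moreover have "\<And>A. (t A / sqrt (s A))\<^sup>2 = (t A)\<^sup>2 / s A" using spos by (simp add: power_divide less_imp_le)
    ultimately show ?thesis by simp
  qed
  have key: "v A - (t A)\<^sup>2 / s A = p * w A * (u (insert e A) - u A)\<^sup>2" if A: "A \<in> Pow (T - {e})" for A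
  proof -
    have wA: "w A > 0" by (rule w_pos)
    have sA: "s A = w A * (1 + r)" unfolding s_def using wi[OF A] by (simp add: algebra_simps)
    have pr: "p = r / (1 + r)" unfolding r_def using p0 p1 by (simp add: field_simps)
    have "v A - (t A)\<^sup>2 / s A = w A * r / (1 + r) * (u (insert e A) - u A)\<^sup>2"
      unfolding v_def sA t_def wi[OF A] using key_alg[OF wA r, of "u A" "u (insert e A)"]
      by (simp add: mult.commute mult.left_commute)
    then show ?thesis using pr by (simp add: mult.commute mult.left_commute)
  qed
  have "VF T u = (\<Sum>A\<in>Pow (T - {e}). s A) * (\<Sum>A\<in>Pow (T - {e}). v A) - (\<Sum>A\<in>Pow (T - {e}). t A)\<^sup>2"
    unfolding VF_def W V2 T1 ..
  also have "\<dots> \<ge> (\<Sum>A\<in>Pow (T - {e}). s A) * (\<Sum>A\<in>Pow (T - {e}). v A) - (\<Sum>A\<in>Pow (T - {e}). s A) * (\<Sum>A\<in>Pow (T - {e}). (t A)\<^sup>2 / s A)"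
    using CS by simp
  also have "(\<Sum>A\<in>Pow (T - {e}). s A) * (\<Sum>A\<in>Pow (T - {e}). v A) - (\<Sum>A\<in>Pow (T - {e}). s A) * (\<Sum>A\<in>Pow (T - {e}). (t A)\<^sup>2 / s A)
      = (\<Sum>A\<in>Pow (T - {e}). s A) * (\<Sum>A\<in>Pow (T - {e}). v A - (t A)\<^sup>2 / s A)"
    by (simp add: sum_subtractf right_diff_distrib)
  also have "\<dots> = (\<Sum>B\<in>Pow T. w B) * (\<Sum>A\<in>Pow (T - {e}). p * w A * (u (insert e A) - u A)\<^sup>2)"
    using key W by simp
  finally show ?thesis .
qed


lemma Ebound:
  "real (card E) * (S2 u - Qf u) \<ge>
     (\<Sum>e\<in>E. \<Sum>A\<in>Pow (E - {e}). p * w A * (u (insert e A) - u A)\<^sup>2 * NN (insert e A))"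
proof -
  define F where "F = (\<lambda>e A. p * w A * (u (insert e A) - u A)\<^sup>2)"
  have Fnn: "F e A \<ge> 0" for e A unfolding F_def using p0 w_pos[of A] by (simp add: less_imp_le)
  have step: "real (card E) * ((1 - p) ^ card (mon \<sigma>) * VF (mon \<sigma>) u) \<ge> (\<Sum>e\<in>mon \<sigma>. \<Sum>A\<in>Pow (mon \<sigma> - {e}). F e A)" for \<sigma>
  proof -
    define c where "c = (1 - p) ^ card (mon \<sigma>)"
    have c0: "c \<ge> 0" unfolding c_def using p1 by simp
    have vf0: "VF (mon \<sigma>) u \<ge> 0" by (rule VF_nonneg[OF finmon])
    have "card (mon \<sigma>) \<le> card E" by (rule card_mono[OF finE mon_sub])
    then have "real (card E) * (c * VF (mon \<sigma>) u) \<ge> real (card (mon \<sigma>)) * (c * VF (mon \<sigma>) u)"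
      using c0 vf0 by (intro mult_right_mono) auto
    moreover have "real (card (mon \<sigma>)) * (c * VF (mon \<sigma>) u) = (\<Sum>e\<in>mon \<sigma>. c * VF (mon \<sigma>) u)" by simp
    moreover have "(\<Sum>e\<in>mon \<sigma>. c * VF (mon \<sigma>) u) \<ge> (\<Sum>e\<in>mon \<sigma>. \<Sum>A\<in>Pow (mon \<sigma> - {e}). F e A)"
    proof (rule sum_mono)
      fix e assume e: "e \<in> mon \<sigma>"
      have "c * VF (mon \<sigma>) u \<ge> c * ((\<Sum>B\<in>Pow (mon \<sigma>). w B) * (\<Sum>A\<in>Pow (mon \<sigma> - {e}). F e A))"
        using VF_bound[OF finmon e, of u] c0 unfolding F_def by (intro mult_left_mono) auto
      also have "c * ((\<Sum>B\<in>Pow (mon \<sigma>). w B) * (\<Sum>A\<in>Pow (mon \<sigma> - {e}). F e A)) = (\<Sum>A\<in>Pow (mon \<sigma> - {e}). F e A)"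
        using pow_w_mon[of \<sigma>] unfolding c_def by (simp add: mult.assoc[symmetric])
      finally show "(\<Sum>A\<in>Pow (mon \<sigma> - {e}). F e A) \<le> c * VF (mon \<sigma>) u" .
    qed
    ultimately show ?thesis unfolding c_def by linarith
  qed
  have "real (card E) * (S2 u - Qf u) = (\<Sum>\<sigma>\<in>Col. real (card E) * ((1 - p) ^ card (mon \<sigma>) * VF (mon \<sigma>) u))"
    unfolding Dform by (simp add: sum_distrib_left)
  also have "\<dots> \<ge> (\<Sum>\<sigma>\<in>Col. \<Sum>e\<in>mon \<sigma>. \<Sum>A\<in>Pow (mon \<sigma> - {e}). F e A)"
    by (rule sum_mono[OF step])
  also have "(\<Sum>\<sigma>\<in>Col. \<Sum>e\<in>mon \<sigma>. \<Sum>A\<in>Pow (mon \<sigma> - {e}). F e A)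
      = (\<Sum>\<sigma>\<in>Col. \<Sum>e\<in>E. \<Sum>A\<in>Pow (E - {e}). ind (insert e A \<subseteq> mon \<sigma>) * F e A)"
  proof (rule sum.cong[OF refl])
    fix \<sigma> assume "\<sigma> \<in> Col"
    have "(\<Sum>e\<in>mon \<sigma>. \<Sum>A\<in>Pow (mon \<sigma> - {e}). F e A) = (\<Sum>e\<in>E. if e \<in> mon \<sigma> then (\<Sum>A\<in>Pow (mon \<sigma> - {e}). F e A) else 0)"
    proof -
      have "{e \<in> E. e \<in> mon \<sigma>} = mon \<sigma>" using mon_sub by auto
      then show ?thesis using sum.inter_filter[OF finE, of "\<lambda>e. \<Sum>A\<in>Pow (mon \<sigma> - {e}). F e A" "\<lambda>e. e \<in> mon \<sigma>"] by simp
    qed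
    also have "\<dots> = (\<Sum>e\<in>E. \<Sum>A\<in>Pow (E - {e}). ind (insert e A \<subseteq> mon \<sigma>) * F e A)"
    proof (rule sum.cong[OF refl])
      fix e assume eE: "e \<in> E"
      show "(if e \<in> mon \<sigma> then (\<Sum>A\<in>Pow (mon \<sigma> - {e}). F e A) else 0) = (\<Sum>A\<in>Pow (E - {e}). ind (insert e A \<subseteq> mon \<sigma>) * F e A)"
      proof (cases "e \<in> mon \<sigma>")
        case True
        have "(\<Sum>A\<in>Pow (mon \<sigma> - {e}). F e A) = (\<Sum>A\<in>Pow (E - {e}). if A \<subseteq> mon \<sigma> - {e} then F e A else 0)"
          by (rule sum_Pow_restrict[symmetric]) (use finE mon_sub in auto)
        also have "\<dots> = (\<Sum>A\<in>Pow (E - {e}). ind (insert e A \<subseteq> mon \<sigma>) * F e A)"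
          by (rule sum.cong[OF refl]) (use True in \<open>auto simp: ind_def\<close>)
        finally show ?thesis using True by simp
      next
        case False
        then show ?thesis by (simp add: ind_def)
      qed
    qed
    finally show "(\<Sum>e\<in>mon \<sigma>. \<Sum>A\<in>Pow (mon \<sigma> - {e}). F e A) = (\<Sum>e\<in>E. \<Sum>A\<in>Pow (E - {e}). ind (insert e A \<subseteq> mon \<sigma>) * F e A)" .
  qed
  also have "\<dots> = (\<Sum>e\<in>E. \<Sum>\<sigma>\<in>Col. \<Sum>A\<in>Pow (E - {e}). ind (insert e A \<subseteq> mon \<sigma>) * F e A)"
    by (rule sum.swap)
  also have "\<dots> = (\<Sum>e\<in>E. \<Sum>A\<in>Pow (E - {e}). \<Sum>\<sigma>\<in>Col. ind (insert e A \<subseteq> mon \<sigma>) * F e A)"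
    by (intro sum.cong refl sum.swap)
  also have "\<dots> = (\<Sum>e\<in>E. \<Sum>A\<in>Pow (E - {e}). F e A * NN (insert e A))"
    by (intro sum.cong refl) (simp add: NN_sum sum_distrib_left sum_distrib_right mult.commute)
  finally show ?thesis unfolding F_def .
qed

end

context swl begin

definition R :: "('e set \<Rightarrow> real) \<Rightarrow> 'e \<Rightarrow> real" where
  "R u e = (\<Sum>A\<in>Pow (E - {e}). (1 - p) * M (insert e A) * (u (insert e A) - u A)\<^sup>2)"

lemma w_mult:
  assumes "A \<subseteq> E" "B \<subseteq> E"
  shows "w A * w B = w ((B \<inter> X) \<union> (A - X)) * w ((A \<inter> X) \<union> (B - X))"
proof -
  have fA: "finite A" "finite B" using assms finite_subset finE by auto
  have cA: "card A = card (A \<inter> X) + card (A - X)"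
  proof -
    have "A = (A \<inter> X) \<union> (A - X)" by blast
    then have "card A = card ((A \<inter> X) \<union> (A - X))" by simp
    also have "\<dots> = card (A \<inter> X) + card (A - X)" by (rule card_Un_disjoint) (use fA in auto)
    finally show ?thesis .
  qed
  have cB: "card B = card (B \<inter> X) + card (B - X)"
  proof -
    have "B = (B \<inter> X) \<union> (B - X)" by blast
    then have "card B = card ((B \<inter> X) \<union> (B - X))" by simp
    also have "\<dots> = card (B \<inter> X) + card (B - X)" by (rule card_Un_disjoint) (use fA in auto)
    finally show ?thesis .
  qed
  have cS: "card ((B \<inter> X) \<union> (A - X)) = card (B \<inter> X) + card (A - X)"
    by (rule card_Un_disjoint) (use fA in auto)
  have cT: "card ((A \<inter> X) \<union> (B - X)) = card (A \<inter> X) + card (B - X)"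
    by (rule card_Un_disjoint) (use fA in auto)
  show ?thesis unfolding w_def power_add[symmetric] cA cB cS cT by (simp add: algebra_simps)
qed

lemma M_mult:
  assumes AE: "A \<subseteq> E" and BE: "B \<subseteq> E" and XE: "X \<subseteq> E"
    and width: "card ((\<Union>e\<in>X. ends e) \<inter> (\<Union>e\<in>E - X. ends e)) \<le> l"
  shows "M A * M B \<le> real q ^ l * (M ((B \<inter> X) \<union> (A - X)) * M ((A \<inter> X) \<union> (B - X)))"
proof -
  define S where "S = (B \<inter> X) \<union> (A - X)"
  define T where "T = (A \<inter> X) \<union> (B - X)"
  have SE: "S \<subseteq> E" "T \<subseteq> E" unfolding S_def T_def using AE BE by auto
  have "card (colset V E ends q A) * card (colset V E ends q B)
     \<le> q ^ card ((\<Union>e\<in>X. ends e) \<inter> (\<Union>e\<in>E - X. ends e)) * (card (colset V E ends q S) * card (colset V E ends q T))"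
    unfolding S_def T_def by (rule colset_swap[OF finV q1 endsV' AE BE XE])
  also have "\<dots> \<le> q ^ l * (card (colset V E ends q S) * card (colset V E ends q T))"
    using width q1 by (intro mult_right_mono power_increasing) auto
  finally have "NN A * NN B \<le> real q ^ l * (NN S * NN T)"
    unfolding NN_def by (metis of_nat_le_iff of_nat_mult of_nat_power)
  moreover have "w A * w B = w S * w T" unfolding S_def T_def by (rule w_mult[OF AE BE])
  moreover have "w A * w B \<ge> 0" using w_pos by (simp add: less_imp_le)
  ultimately have "w A * w B * (NN A * NN B) \<le> w S * w T * (real q ^ l * (NN S * NN T))"
    by (metis mult_left_mono)
  then show ?thesis unfolding S_def[symmetric] T_def[symmetric]
    using M_NN[OF AE] M_NN[OF BE] M_NN[OF SE(1)] M_NN[OF SE(2)] by (simp add: algebra_simps)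
qed


lemma M_insert_bounds:
  assumes A: "A \<in> Pow (E - {e})" and eE: "e \<in> E"
  shows "M A \<le> real q * (1 - p) / p * M (insert e A)" and "M (insert e A) \<le> p / (1 - p) * M A"
proof -
  have AE: "A \<subseteq> E" and eA: "e \<notin> A" using A by auto
  have AeE: "insert e A \<subseteq> E" using AE eE by auto
  have fA: "finite A" using AE finE finite_subset by auto
  have wi: "w (insert e A) = w A * (p / (1 - p))" by (rule w_insert[OF fA eA])
  have n1: "NN A \<le> real q * NN (insert e A)"
    unfolding NN_def using colset_add_edge[OF finV q1 endsV eE, of A]
    by (metis of_nat_le_iff of_nat_mult)
  have "card (colset V E ends q (insert e A)) \<le> card (colset V E ends q A)"
    by (rule card_mono[OF finite_colset[OF finV] colset_anti]) auto
  then have n2: "NN (insert e A) \<le> NN A" unfolding NN_def by simp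
  have wA: "w A > 0" by (rule w_pos)
  have "M A = w A * NN A" by (rule M_NN[OF AE])
  also have "\<dots> \<le> w A * (real q * NN (insert e A))" using n1 wA by (intro mult_left_mono) auto
  also have "\<dots> = real q * (1 - p) / p * (w (insert e A) * NN (insert e A))"
    unfolding wi using p0 p1 by (simp add: field_simps)
  also have "\<dots> = real q * (1 - p) / p * M (insert e A)" using M_NN[OF AeE] by simp
  finally show "M A \<le> real q * (1 - p) / p * M (insert e A)" .
  have "M (insert e A) = w A * (p / (1 - p)) * NN (insert e A)" using M_NN[OF AeE] wi by simp
  also have "\<dots> \<le> w A * (p / (1 - p)) * NN A" using n2 wA p0 p1 by (intro mult_left_mono) auto
  also have "\<dots> = p / (1 - p) * M A" using M_NN[OF AE] by simp
  finally show "M (insert e A) \<le> p / (1 - p) * M A" .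
qed

lemma Ti_bound:
  assumes XE: "X \<subseteq> E" and eE: "e \<in> E" and eX: "e \<notin> X"
    and width: "card ((\<Union>e\<in>X. ends e) \<inter> (\<Union>e\<in>E - X. ends e)) \<le> l"
  shows "(\<Sum>A\<in>Pow E. \<Sum>B\<in>Pow E. M A * M B * (u ((B \<inter> insert e X) \<union> (A - insert e X)) - u ((B \<inter> X) \<union> (A - X)))\<^sup>2)
         \<le> 2 * real q ^ (l + 1) * Z * R u e"
proof -
  define PE where "PE = Pow E"
  define \<Phi> where "\<Phi> = (\<lambda>(A::'e set, B::'e set). ((B \<inter> X) \<union> (A - X), (A \<inter> X) \<union> (B - X)))"
  define G where "G = (\<lambda>(S::'e set, T::'e set). M S * M T * (u ((S - {e}) \<union> (T \<inter> {e})) - u S)\<^sup>2)"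
  define a where "a = (\<Sum>H\<in>Pow (E - {e}). M (insert e H))"
  define b where "b = (\<Sum>H\<in>Pow (E - {e}). M H)"
  have finPE: "finite PE" unfolding PE_def using finE by simp
  have "(\<Sum>A\<in>Pow E. \<Sum>B\<in>Pow E. M A * M B * (u ((B \<inter> insert e X) \<union> (A - insert e X)) - u ((B \<inter> X) \<union> (A - X)))\<^sup>2)
      = (\<Sum>(A,B)\<in>PE \<times> PE. M A * M B * (u ((B \<inter> insert e X) \<union> (A - insert e X)) - u ((B \<inter> X) \<union> (A - X)))\<^sup>2)"
    unfolding PE_def by (rule sum.cartesian_product)
  also have "\<dots> \<le> (\<Sum>x\<in>PE \<times> PE. real q ^ l * G (\<Phi> x))"
  proof (rule sum_mono)
    fix x assume x: "x \<in> PE \<times> PE"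
    obtain A B where xAB: "x = (A, B)" by (cases x)
    have AE: "A \<subseteq> E" and BE: "B \<subseteq> E" using x xAB unfolding PE_def by auto
    have eq: "(B \<inter> insert e X) \<union> (A - insert e X) = (((B \<inter> X) \<union> (A - X)) - {e}) \<union> (((A \<inter> X) \<union> (B - X)) \<inter> {e})"
      using eX by auto
    have sq: "(u ((B \<inter> insert e X) \<union> (A - insert e X)) - u ((B \<inter> X) \<union> (A - X)))\<^sup>2 \<ge> 0" by simp
    have "M A * M B * (u ((B \<inter> insert e X) \<union> (A - insert e X)) - u ((B \<inter> X) \<union> (A - X)))\<^sup>2
        \<le> real q ^ l * (M ((B \<inter> X) \<union> (A - X)) * M ((A \<inter> X) \<union> (B - X))) * (u ((B \<inter> insert e X) \<union> (A - insert e X)) - u ((B \<inter> X) \<union> (A - X)))\<^sup>2"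
      by (rule mult_right_mono[OF M_mult[OF AE BE XE width] sq])
    then show "(case x of (A, B) \<Rightarrow> M A * M B * (u ((B \<inter> insert e X) \<union> (A - insert e X)) - u ((B \<inter> X) \<union> (A - X)))\<^sup>2) \<le> real q ^ l * G (\<Phi> x)"
      unfolding xAB \<Phi>_def G_def using eq by (simp add: mult.assoc)
  qed
  also have "\<dots> = real q ^ l * (\<Sum>x\<in>PE \<times> PE. G (\<Phi> x))" by (simp add: sum_distrib_left)
  finally have first: "(\<Sum>A\<in>Pow E. \<Sum>B\<in>Pow E. M A * M B * (u ((B \<inter> insert e X) \<union> (A - insert e X)) - u ((B \<inter> X) \<union> (A - X)))\<^sup>2)
      \<le> real q ^ l * (\<Sum>x\<in>PE \<times> PE. G (\<Phi> x))" .
  have "(\<Sum>x\<in>PE \<times> PE. G (\<Phi> x)) = (\<Sum>x\<in>PE \<times> PE. G x)"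
  proof (rule sum.reindex_bij_betw)
    have inv: "\<Phi> (\<Phi> x) = x" if "x \<in> PE \<times> PE" for x
      using that unfolding \<Phi>_def PE_def by (cases x) auto
    have into: "\<Phi> x \<in> PE \<times> PE" if "x \<in> PE \<times> PE" for x
      using that unfolding \<Phi>_def PE_def by (cases x) auto
    show "bij_betw \<Phi> (PE \<times> PE) (PE \<times> PE)"
      by (rule bij_betwI[where g = \<Phi>]) (use inv into in auto)
  qed
  also have "(\<Sum>x\<in>PE \<times> PE. G x) = (\<Sum>S\<in>PE. \<Sum>T\<in>PE. G (S, T))"
  proof -
    have "(\<Sum>S\<in>PE. \<Sum>T\<in>PE. G (S, T)) = (\<Sum>(S,T)\<in>PE \<times> PE. G (S, T))" by (rule sum.cartesian_product)
    then show ?thesis by (simp add: case_prod_eta)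
  qed
  also have "\<dots> = (\<Sum>S\<in>PE. M S * b * (u (S - {e}) - u S)\<^sup>2 + M S * a * (u (insert e S) - u S)\<^sup>2)"
  proof (rule sum.cong[OF refl])
    fix S
    have "(\<Sum>T\<in>PE. G (S, T)) = (\<Sum>H\<in>Pow (E - {e}). G (S, H) + G (S, insert e H))"
      unfolding PE_def by (rule sum_Pow_remove[OF finE eE])
    also have "\<dots> = (\<Sum>H\<in>Pow (E - {e}). M S * (u (S - {e}) - u S)\<^sup>2 * M H + M S * (u (insert e S) - u S)\<^sup>2 * M (insert e H))"
    proof (rule sum.cong[OF refl])
      fix H assume "H \<in> Pow (E - {e})"
      then have "(S - {e}) \<union> (H \<inter> {e}) = S - {e}" "(S - {e}) \<union> (insert e H \<inter> {e}) = insert e S" by auto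
      then show "G (S, H) + G (S, insert e H) = M S * (u (S - {e}) - u S)\<^sup>2 * M H + M S * (u (insert e S) - u S)\<^sup>2 * M (insert e H)"
        unfolding G_def by (simp add: algebra_simps)
    qed
    also have "\<dots> = M S * b * (u (S - {e}) - u S)\<^sup>2 + M S * a * (u (insert e S) - u S)\<^sup>2"
      unfolding a_def b_def by (simp add: sum.distrib sum_distrib_left algebra_simps)
    finally show "(\<Sum>T\<in>PE. G (S, T)) = M S * b * (u (S - {e}) - u S)\<^sup>2 + M S * a * (u (insert e S) - u S)\<^sup>2" .
  qed
  also have "\<dots> = (\<Sum>A\<in>Pow (E - {e}). (M A * a + M (insert e A) * b) * (u (insert e A) - u A)\<^sup>2)"
  proof -
    have "(\<Sum>S\<in>PE. M S * b * (u (S - {e}) - u S)\<^sup>2 + M S * a * (u (insert e S) - u S)\<^sup>2)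
      = (\<Sum>A\<in>Pow (E - {e}). (M A * b * (u (A - {e}) - u A)\<^sup>2 + M A * a * (u (insert e A) - u A)\<^sup>2)
            + (M (insert e A) * b * (u (insert e A - {e}) - u (insert e A))\<^sup>2 + M (insert e A) * a * (u (insert e (insert e A)) - u (insert e A))\<^sup>2))"
      unfolding PE_def by (rule sum_Pow_remove[OF finE eE])
    also have "\<dots> = (\<Sum>A\<in>Pow (E - {e}). (M A * a + M (insert e A) * b) * (u (insert e A) - u A)\<^sup>2)"
    proof (rule sum.cong[OF refl])
      fix A assume "A \<in> Pow (E - {e})"
      then have "A - {e} = A" "insert e A - {e} = A" by auto
      then show "(M A * b * (u (A - {e}) - u A)\<^sup>2 + M A * a * (u (insert e A) - u A)\<^sup>2)
            + (M (insert e A) * b * (u (insert e A - {e}) - u (insert e A))\<^sup>2 + M (insert e A) * a * (u (insert e (insert e A)) - u (insert e A))\<^sup>2)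
          = (M A * a + M (insert e A) * b) * (u (insert e A) - u A)\<^sup>2"
        by (simp add: power2_commute algebra_simps)
    qed
    finally show ?thesis .
  qed
  also have "\<dots> \<le> (\<Sum>A\<in>Pow (E - {e}). (2 * real q * Z) * ((1 - p) * M (insert e A) * (u (insert e A) - u A)\<^sup>2))"
  proof (rule sum_mono)
    fix A assume A: "A \<in> Pow (E - {e})"
    define c where "c = real q * (1 - p) / p"
    have c0: "c \<ge> 0" unfolding c_def using p0 p1 by simp
    have b_le: "b \<le> c * a"
    proof -
      have "b \<le> (\<Sum>H\<in>Pow (E - {e}). c * M (insert e H))" unfolding b_def c_def
        by (rule sum_mono) (rule M_insert_bounds(1)[OF _ eE], simp)
      then show ?thesis unfolding a_def by (simp add: sum_distrib_left)
    qed
    have a_le: "a \<le> p / (1 - p) * b"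
    proof -
      have "a \<le> (\<Sum>H\<in>Pow (E - {e}). p / (1 - p) * M H)" unfolding a_def
        by (rule sum_mono) (rule M_insert_bounds(2)[OF _ eE], simp)
      then show ?thesis unfolding b_def by (simp add: sum_distrib_left)
    qed
    have ab: "a + b = Z" unfolding a_def b_def Z_def using sum_Pow_remove[OF finE eE, of M] by (simp add: sum.distrib)
    have aZ: "a \<le> p * Z"
    proof -
      have "(1 - p) * a \<le> p * b" using a_le p1 by (simp add: field_simps)
      then have "a \<le> p * (a + b)" by (simp add: algebra_simps)
      then show ?thesis using ab by simp
    qed
    have a0: "a \<ge> 0" unfolding a_def using M_pos by (intro sum_nonneg) (simp add: less_imp_le)
    have MA: "M A \<le> c * M (insert e A)" unfolding c_def by (rule M_insert_bounds(1)[OF A eE])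
    have Mi0: "M (insert e A) \<ge> 0" using M_pos by (simp add: less_imp_le)
    have "M A * a + M (insert e A) * b \<le> c * M (insert e A) * a + M (insert e A) * (c * a)"
      using MA b_le a0 Mi0 by (intro add_mono mult_right_mono mult_left_mono) auto
    also have "\<dots> = 2 * c * a * M (insert e A)" by (simp add: algebra_simps)
    also have "\<dots> \<le> 2 * c * (p * Z) * M (insert e A)"
      using aZ c0 Mi0 by (intro mult_right_mono mult_left_mono) auto
    also have "\<dots> = (2 * real q * Z) * ((1 - p) * M (insert e A))"
      unfolding c_def using p0 by (simp add: field_simps)
    finally have "M A * a + M (insert e A) * b \<le> (2 * real q * Z) * ((1 - p) * M (insert e A))" .
    then show "(M A * a + M (insert e A) * b) * (u (insert e A) - u A)\<^sup>2 \<le> (2 * real q * Z) * ((1 - p) * M (insert e A) * (u (insert e A) - u A)\<^sup>2)"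
      by (metis mult.assoc mult_right_mono zero_le_power2)
  qed
  also have "\<dots> = 2 * real q * Z * R u e" unfolding R_def by (simp add: sum_distrib_left)
  finally have second: "(\<Sum>x\<in>PE \<times> PE. G (\<Phi> x)) \<le> 2 * real q * Z * R u e" .
  have "(\<Sum>A\<in>Pow E. \<Sum>B\<in>Pow E. M A * M B * (u ((B \<inter> insert e X) \<union> (A - insert e X)) - u ((B \<inter> X) \<union> (A - X)))\<^sup>2)
         \<le> real q ^ l * (2 * real q * Z * R u e)"
    by (rule order_trans[OF first mult_left_mono[OF second]]) simp
  then show ?thesis by (simp add: algebra_simps)
qed


lemma R_alt: "R u e = (\<Sum>A\<in>Pow (E - {e}). p * w A * (u (insert e A) - u A)\<^sup>2 * NN (insert e A))"
  if eE: "e \<in> E"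
  unfolding R_def
proof (rule sum.cong[OF refl])
  fix A assume A: "A \<in> Pow (E - {e})"
  then have AE: "insert e A \<subseteq> E" "finite A" "e \<notin> A" using eE finE finite_subset by auto
  have "M (insert e A) = w A * (p / (1 - p)) * NN (insert e A)"
    using M_NN[OF AE(1)] w_insert[OF AE(2,3)] by simp
  moreover have "(1 - p) * (p / (1 - p)) = p" using p1 by simp
  ultimately have "(1 - p) * M (insert e A) = p * w A * NN (insert e A)"
    by (metis (no_types, lifting) mult.assoc mult.commute)
  then show "(1 - p) * M (insert e A) * (u (insert e A) - u A)\<^sup>2 = p * w A * (u (insert e A) - u A)\<^sup>2 * NN (insert e A)"
    by (simp add: mult.commute mult.left_commute)
qed

lemma var_identity:
  "(\<Sum>A\<in>Pow E. \<Sum>B\<in>Pow E. M A * M B * (u B - u A)\<^sup>2) = 2 * Z * S2 u - 2 * (\<Sum>A\<in>Pow E. M A * u A)\<^sup>2"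
proof -
  have t1: "(\<Sum>A\<in>Pow E. \<Sum>B\<in>Pow E. M A * (M B * (u B)\<^sup>2)) = Z * S2 u"
    unfolding Z_def S2_def by (rule sum_product[symmetric])
  have t2: "(\<Sum>A\<in>Pow E. \<Sum>B\<in>Pow E. (M A * (u A)\<^sup>2) * M B) = S2 u * Z"
    unfolding Z_def S2_def by (rule sum_product[symmetric])
  have t3: "(\<Sum>A\<in>Pow E. \<Sum>B\<in>Pow E. (M A * u A) * (M B * u B)) = (\<Sum>A\<in>Pow E. M A * u A)\<^sup>2"
    unfolding power2_eq_square by (rule sum_product[symmetric])
  have "(\<Sum>A\<in>Pow E. \<Sum>B\<in>Pow E. M A * M B * (u B - u A)\<^sup>2)
      = (\<Sum>A\<in>Pow E. \<Sum>B\<in>Pow E. (M A * (M B * (u B)\<^sup>2) + (M A * (u A)\<^sup>2) * M B) - 2 * ((M A * u A) * (M B * u B)))"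
    by (intro sum.cong refl) (simp add: power2_eq_square algebra_simps)
  also have "\<dots> = (\<Sum>A\<in>Pow E. \<Sum>B\<in>Pow E. M A * (M B * (u B)\<^sup>2)) + (\<Sum>A\<in>Pow E. \<Sum>B\<in>Pow E. (M A * (u A)\<^sup>2) * M B)
      - 2 * (\<Sum>A\<in>Pow E. \<Sum>B\<in>Pow E. (M A * u A) * (M B * u B))"
    by (simp only: sum_subtractf sum.distrib sum_distrib_left)
  finally show ?thesis unfolding t1 t2 t3 by simp
qed

lemma sq_sum_le: "(\<Sum>i<m. d i)\<^sup>2 \<le> real m * (\<Sum>i<m. (d i)\<^sup>2)" for d :: "nat \<Rightarrow> real"
proof -
  have "(\<Sum>i<m. 1 * d i)\<^sup>2 \<le> (\<Sum>i<m. 1\<^sup>2) * (\<Sum>i<m. (d i)\<^sup>2)" by (rule Cauchy_Schwarz_ineq_sum)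
  then show ?thesis by simp
qed

lemma poincare:
  assumes es: "distinct es" "set es = E"
    and width: "\<forall>i\<le>length es. card ((\<Union>e\<in>set (take i es). ends e) \<inter> (\<Union>e\<in>set (drop i es). ends e)) \<le> l"
    and mean0: "(\<Sum>A\<in>Pow E. M A * u A) = 0"
  shows "S2 u \<le> real (card E) ^ 2 * real q ^ (l + 1) * (S2 u - Qf u)"
proof -
  define m where "m = length es"
  have mE: "card E = m" unfolding m_def using distinct_card[OF es(1)] es(2) by simp
  define X where "X = (\<lambda>i. set (take i es))"
  define path where "path = (\<lambda>A B i. (B \<inter> X i) \<union> (A - X i))"
  have XE: "X i \<subseteq> E" for i unfolding X_def using set_take_subset[of i es] es(2) by simp
  have EX: "E - X i = set (drop i es)" for i
  proof -
    have "set es = X i \<union> set (drop i es)" unfolding X_def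
      using set_append[of "take i es" "drop i es"] by simp
    moreover have "X i \<inter> set (drop i es) = {}"
      unfolding X_def using es(1) distinct_append[of "take i es" "drop i es"] by simp
    ultimately show ?thesis using es(2) by auto
  qed
  have X0: "X 0 = {}" unfolding X_def by simp
  have Xm: "X m = E" unfolding X_def m_def using es(2) by simp
  have XS: "X (Suc i) = insert (es ! i) (X i)" if "i < m" for i
    using that unfolding X_def m_def by (simp add: take_Suc_conv_app_nth)
  have eiE: "es ! i \<in> E" if "i < m" for i using that es(2) unfolding m_def by auto
  have eiX: "es ! i \<notin> X i" if "i < m" for i
  proof
    assume "es ! i \<in> X i"
    then obtain j where j: "j < length (take i es)" "take i es ! j = es ! i"
      unfolding X_def by (auto simp: in_set_conv_nth)
    then have "j < i" "es ! j = es ! i" by auto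
    moreover have "j < length es" "i < length es" using that \<open>j < i\<close> unfolding m_def by auto
    ultimately show False using nth_eq_iff_index_eq[OF es(1)] by auto
  qed
  have Ti: "(\<Sum>A\<in>Pow E. \<Sum>B\<in>Pow E. M A * M B * (u (path A B (Suc i)) - u (path A B i))\<^sup>2)
      \<le> 2 * real q ^ (l + 1) * Z * R u (es ! i)" if i: "i < m" for i
  proof -
    have w0: "card ((\<Union>e\<in>X i. ends e) \<inter> (\<Union>e\<in>set (drop i es). ends e)) \<le> l"
      using width i unfolding X_def m_def by auto
    have w: "card ((\<Union>e\<in>X i. ends e) \<inter> (\<Union>e\<in>E - X i. ends e)) \<le> l"
      using w0 unfolding EX .
    show ?thesis unfolding path_def XS[OF i] by (rule Ti_bound[OF XE eiE[OF i] eiX[OF i] w])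
  qed
  have pathbound: "(u B - u A)\<^sup>2 \<le> real m * (\<Sum>i<m. (u (path A B (Suc i)) - u (path A B i))\<^sup>2)"
    if AB: "A \<in> Pow E" "B \<in> Pow E" for A B
  proof -
    have "path A B 0 = A" unfolding path_def X0 by simp
    moreover have "path A B m = B" unfolding path_def Xm using AB by auto
    moreover have "(\<Sum>i<m. u (path A B (Suc i)) - u (path A B i)) = u (path A B m) - u (path A B 0)"
      by (rule sum_lessThan_telescope)
    ultimately have "u B - u A = (\<Sum>i<m. u (path A B (Suc i)) - u (path A B i))"
      by simp
    then show ?thesis using sq_sum_le[of "\<lambda>i. u (path A B (Suc i)) - u (path A B i)" m] by simp
  qed
  have "2 * Z * S2 u = (\<Sum>A\<in>Pow E. \<Sum>B\<in>Pow E. M A * M B * (u B - u A)\<^sup>2)"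
    using var_identity[of u] mean0 by simp
  also have "\<dots> \<le> (\<Sum>A\<in>Pow E. \<Sum>B\<in>Pow E. M A * M B * (real m * (\<Sum>i<m. (u (path A B (Suc i)) - u (path A B i))\<^sup>2)))"
  proof (intro sum_mono)
    fix A B assume "A \<in> Pow E" "B \<in> Pow E"
    moreover have "M A * M B \<ge> 0" using M_pos by (simp add: less_imp_le)
    ultimately show "M A * M B * (u B - u A)\<^sup>2 \<le> M A * M B * (real m * (\<Sum>i<m. (u (path A B (Suc i)) - u (path A B i))\<^sup>2))"
      using pathbound by (intro mult_left_mono) auto
  qed
  also have "\<dots> = real m * (\<Sum>i<m. \<Sum>A\<in>Pow E. \<Sum>B\<in>Pow E. M A * M B * (u (path A B (Suc i)) - u (path A B i))\<^sup>2)"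
  proof -
    have "(\<Sum>A\<in>Pow E. \<Sum>B\<in>Pow E. M A * M B * (real m * (\<Sum>i<m. (u (path A B (Suc i)) - u (path A B i))\<^sup>2)))
        = real m * (\<Sum>A\<in>Pow E. \<Sum>B\<in>Pow E. \<Sum>i<m. M A * M B * (u (path A B (Suc i)) - u (path A B i))\<^sup>2)"
      by (simp add: sum_distrib_left algebra_simps)
    also have "(\<Sum>A\<in>Pow E. \<Sum>B\<in>Pow E. \<Sum>i<m. M A * M B * (u (path A B (Suc i)) - u (path A B i))\<^sup>2)
        = (\<Sum>i<m. \<Sum>A\<in>Pow E. \<Sum>B\<in>Pow E. M A * M B * (u (path A B (Suc i)) - u (path A B i))\<^sup>2)"
      by (simp add: sum.swap[of _ "{..<m}"])
    finally show ?thesis .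
  qed
  also have "\<dots> \<le> real m * (\<Sum>i<m. 2 * real q ^ (l + 1) * Z * R u (es ! i))"
    by (intro mult_left_mono sum_mono Ti) auto
  also have "(\<Sum>i<m. 2 * real q ^ (l + 1) * Z * R u (es ! i)) = 2 * real q ^ (l + 1) * Z * (\<Sum>e\<in>E. R u e)"
  proof -
    have "(\<Sum>i<m. R u (es ! i)) = (\<Sum>e\<in>E. R u e)"
      using sum.reindex_bij_betw[OF bij_betw_nth[OF es(1) _ es(2)[symmetric]], where g = "R u"] unfolding m_def by simp
    then show ?thesis by (simp only: sum_distrib_left[symmetric])
  qed
  finally have A1: "2 * Z * S2 u \<le> real m * (2 * real q ^ (l + 1) * Z * (\<Sum>e\<in>E. R u e))" .
  then have A2: "S2 u \<le> real m * real q ^ (l + 1) * (\<Sum>e\<in>E. R u e)"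
    using Z_pos by (simp add: algebra_simps)
  have "(\<Sum>e\<in>E. R u e) = (\<Sum>e\<in>E. \<Sum>A\<in>Pow (E - {e}). p * w A * (u (insert e A) - u A)\<^sup>2 * NN (insert e A))"
    using R_alt by (intro sum.cong) auto
  also have "\<dots> \<le> real m * (S2 u - Qf u)" using Ebound[of u] mE by simp
  finally have "real m * real q ^ (l + 1) * (\<Sum>e\<in>E. R u e) \<le> real m * real q ^ (l + 1) * (real m * (S2 u - Qf u))"
    by (intro mult_left_mono) auto
  with A2 show ?thesis unfolding mE by (simp add: power2_eq_square algebra_simps)
qed

end

context swl begin

lemma Msym: "M A * P A B = M B * P B A"
  unfolding balance Kf_def by (simp add: Un_commute mult.commute)

lemma eig_mean:
  assumes eq: "\<forall>x\<in>Pow E. (\<Sum>y\<in>Pow E. complex_of_real (P x y) * f y) = \<xi> * f x" and ne: "\<xi> \<noteq> 1"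
  shows "(\<Sum>A\<in>Pow E. complex_of_real (M A) * f A) = 0"
proof -
  have "\<xi> * (\<Sum>A\<in>Pow E. complex_of_real (M A) * f A) = (\<Sum>A\<in>Pow E. complex_of_real (M A) * (\<xi> * f A))"
    by (simp add: sum_distrib_left mult_ac)
  also have "\<dots> = (\<Sum>A\<in>Pow E. complex_of_real (M A) * (\<Sum>B\<in>Pow E. complex_of_real (P A B) * f B))"
    using eq by simp
  also have "\<dots> = (\<Sum>A\<in>Pow E. \<Sum>B\<in>Pow E. complex_of_real (M A * P A B) * f B)"
    by (simp add: sum_distrib_left mult.assoc)
  also have "\<dots> = (\<Sum>B\<in>Pow E. \<Sum>A\<in>Pow E. complex_of_real (M B * P B A) * f B)"
    by (subst sum.swap) (simp add: Msym)
  also have "\<dots> = (\<Sum>B\<in>Pow E. complex_of_real (M B * (\<Sum>A\<in>Pow E. P B A)) * f B)"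
    by (simp add: sum_distrib_left sum_distrib_right)
  also have "\<dots> = (\<Sum>B\<in>Pow E. complex_of_real (M B) * f B)"
    using row_sum by (intro sum.cong refl) auto
  finally have "(\<xi> - 1) * (\<Sum>A\<in>Pow E. complex_of_real (M A) * f A) = 0" by (simp add: algebra_simps)
  then show ?thesis using ne by simp
qed

lemma eig_quad:
  assumes eq: "\<forall>x\<in>Pow E. (\<Sum>y\<in>Pow E. complex_of_real (P x y) * f y) = \<xi> * f x"
  shows "\<xi> * complex_of_real (S2 (\<lambda>A. Re (f A)) + S2 (\<lambda>A. Im (f A)))
       = complex_of_real (Qf (\<lambda>A. Re (f A)) + Qf (\<lambda>A. Im (f A)))"
proof -
  define u where "u = (\<lambda>A. Re (f A))"
  define v where "v = (\<lambda>A. Im (f A))"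
  have "\<xi> * complex_of_real (S2 u + S2 v) = (\<Sum>A\<in>Pow E. complex_of_real (M A) * cnj (f A) * (\<xi> * f A))"
  proof -
    have "(\<Sum>A\<in>Pow E. complex_of_real (M A) * cnj (f A) * (\<xi> * f A))
        = (\<Sum>A\<in>Pow E. \<xi> * complex_of_real (M A * ((u A)\<^sup>2 + (v A)\<^sup>2)))"
    proof (rule sum.cong[OF refl])
      fix A
      have c: "cnj (f A) * f A = complex_of_real ((u A)\<^sup>2 + (v A)\<^sup>2)"
        using complex_mult_cnj[of "f A"] unfolding u_def v_def by (simp add: mult.commute)
      have "complex_of_real (M A) * cnj (f A) * (\<xi> * f A) = \<xi> * (complex_of_real (M A) * (cnj (f A) * f A))"
        by (simp add: mult_ac)
      also have "\<dots> = \<xi> * complex_of_real (M A * ((u A)\<^sup>2 + (v A)\<^sup>2))" unfolding c of_real_mult ..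
      finally show "complex_of_real (M A) * cnj (f A) * (\<xi> * f A) = \<xi> * complex_of_real (M A * ((u A)\<^sup>2 + (v A)\<^sup>2))" .
    qed
    also have "\<dots> = \<xi> * (\<Sum>A\<in>Pow E. complex_of_real (M A * ((u A)\<^sup>2 + (v A)\<^sup>2)))"
      by (simp add: sum_distrib_left)
    also have "\<dots> = \<xi> * complex_of_real (S2 u + S2 v)"
      unfolding S2_def by (simp add: sum.distrib algebra_simps)
    finally show ?thesis by simp
  qed
  also have "\<dots> = (\<Sum>A\<in>Pow E. complex_of_real (M A) * cnj (f A) * (\<Sum>B\<in>Pow E. complex_of_real (P A B) * f B))"
    using eq by simp
  also have "\<dots> = (\<Sum>A\<in>Pow E. \<Sum>B\<in>Pow E. complex_of_real (M A * P A B) * (cnj (f A) * f B))"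
    by (simp add: sum_distrib_left mult_ac)
  also have "\<dots> = complex_of_real (Qf u + Qf v)"
  proof (rule complex_eqI)
    have "Re (\<Sum>A\<in>Pow E. \<Sum>B\<in>Pow E. complex_of_real (M A * P A B) * (cnj (f A) * f B))
        = (\<Sum>A\<in>Pow E. \<Sum>B\<in>Pow E. M A * P A B * (u A * u B + v A * v B))"
      unfolding u_def v_def by (simp add: Re_sum)
    also have "\<dots> = Qf u + Qf v" unfolding Qf_def by (simp add: sum.distrib algebra_simps)
    finally show "Re (\<Sum>A\<in>Pow E. \<Sum>B\<in>Pow E. complex_of_real (M A * P A B) * (cnj (f A) * f B)) = Re (complex_of_real (Qf u + Qf v))" by simp
    have "Im (\<Sum>A\<in>Pow E. \<Sum>B\<in>Pow E. complex_of_real (M A * P A B) * (cnj (f A) * f B))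
        = (\<Sum>A\<in>Pow E. \<Sum>B\<in>Pow E. M A * P A B * (u A * v B)) - (\<Sum>A\<in>Pow E. \<Sum>B\<in>Pow E. M A * P A B * (v A * u B))"
      unfolding u_def v_def by (simp add: Im_sum sum_subtractf algebra_simps)
    also have "(\<Sum>A\<in>Pow E. \<Sum>B\<in>Pow E. M A * P A B * (v A * u B)) = (\<Sum>A\<in>Pow E. \<Sum>B\<in>Pow E. M A * P A B * (u A * v B))"
    proof -
      have t: "\<And>A B. M A * P A B * (v A * u B) = M B * P B A * (u B * v A)"
        by (metis Msym mult.commute)
      have "(\<Sum>A\<in>Pow E. \<Sum>B\<in>Pow E. M A * P A B * (v A * u B)) = (\<Sum>A\<in>Pow E. \<Sum>B\<in>Pow E. M B * P B A * (u B * v A))"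
        by (simp only: t)
      also have "\<dots> = (\<Sum>B\<in>Pow E. \<Sum>A\<in>Pow E. M B * P B A * (u B * v A))" by (rule sum.swap)
      finally show ?thesis .
    qed
    finally show "Im (\<Sum>A\<in>Pow E. \<Sum>B\<in>Pow E. complex_of_real (M A * P A B) * (cnj (f A) * f B)) = Im (complex_of_real (Qf u + Qf v))" by simp
  qed
  finally show ?thesis unfolding u_def v_def .
qed

lemma S2_Qf_nonneg: "S2 u - Qf u \<ge> 0"
  unfolding Dform using p1 VF_nonneg[OF finmon] by (intro sum_nonneg mult_nonneg_nonneg) auto

lemma S2_nonneg: "S2 u \<ge> 0"
  unfolding S2_def using M_pos by (intro sum_nonneg mult_nonneg_nonneg) (auto simp: less_imp_le)

lemma Q_le:
  assumes es: "distinct es" "set es = E"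
    and width: "\<forall>i\<le>length es. card ((\<Union>e\<in>set (take i es). ends e) \<inter> (\<Union>e\<in>set (drop i es). ends e)) \<le> l"
    and mean0: "(\<Sum>A\<in>Pow E. M A * u A) = 0"
  shows "Qf u \<le> (1 - 1 / (real (card E) ^ 2 * real q ^ (l + 1))) * S2 u"
proof (cases "real (card E) ^ 2 * real q ^ (l + 1) = 0")
  case True
  then have z: "1 / (real (card E) ^ 2 * real q ^ (l + 1)) = 0" by simp
  have "(1 - 1 / (real (card E) ^ 2 * real q ^ (l + 1))) * S2 u = S2 u" by (simp only: z) simp
  then show ?thesis using S2_Qf_nonneg[of u] by linarith
next
  case False
  define K where "K = real (card E) ^ 2 * real q ^ (l + 1)"
  have Kpos: "K > 0" using False unfolding K_def by simp
  have "S2 u \<le> K * (S2 u - Qf u)" unfolding K_def by (rule poincare[OF es width mean0])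
  then have "S2 u / K \<le> S2 u - Qf u" using Kpos by (simp add: field_simps)
  then show ?thesis unfolding K_def[symmetric] by (simp add: algebra_simps)
qed

end

lemma (in swl) eig_bound:
  assumes es: "distinct es" "set es = E"
    and width: "\<forall>i\<le>length es. card ((\<Union>e\<in>set (take i es). ends e) \<inter> (\<Union>e\<in>set (drop i es). ends e)) \<le> l"
    and eig: "is_eigenvalue (Pow E) P \<xi>" and ne: "\<xi> \<noteq> 1"
  shows "cmod \<xi> \<le> 1 - 1 / (real (card E) ^ 2 * real q ^ (l + 1))"
proof -
  define c where "c = 1 - 1 / (real (card E) ^ 2 * real q ^ (l + 1))"
  obtain f where f1: "\<exists>x\<in>Pow E. f x \<noteq> 0"
    and f2: "\<forall>x\<in>Pow E. (\<Sum>y\<in>Pow E. complex_of_real (P x y) * f y) = \<xi> * f x"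
    using eig unfolding is_eigenvalue_def by blast
  define u where "u = (\<lambda>A. Re (f A))"
  define v where "v = (\<lambda>A. Im (f A))"
  have m0: "(\<Sum>A\<in>Pow E. complex_of_real (M A) * f A) = 0" by (rule eig_mean[OF f2 ne])
  have mu: "(\<Sum>A\<in>Pow E. M A * u A) = 0"
  proof -
    have "Re (\<Sum>A\<in>Pow E. complex_of_real (M A) * f A) = (\<Sum>A\<in>Pow E. M A * u A)"
      unfolding u_def by (simp add: Re_sum)
    then show ?thesis using m0 by simp
  qed
  have mv: "(\<Sum>A\<in>Pow E. M A * v A) = 0"
  proof -
    have "Im (\<Sum>A\<in>Pow E. complex_of_real (M A) * f A) = (\<Sum>A\<in>Pow E. M A * v A)"
      unfolding v_def by (simp add: Im_sum)
    then show ?thesis using m0 by simp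
  qed
  have qu: "Qf u \<le> c * S2 u" unfolding c_def by (rule Q_le[OF es width mu])
  have qv: "Qf v \<le> c * S2 v" unfolding c_def by (rule Q_le[OF es width mv])
  have Tpos: "S2 u + S2 v > 0"
  proof -
    obtain x where x: "x \<in> Pow E" "f x \<noteq> 0" using f1 by blast
    have "u x \<noteq> 0 \<or> v x \<noteq> 0" using x(2) unfolding u_def v_def by (simp add: complex_eq_iff)
    then have "(u x)\<^sup>2 + (v x)\<^sup>2 > 0" by (simp add: sum_power2_gt_zero_iff)
    then have pos: "M x * ((u x)\<^sup>2 + (v x)\<^sup>2) > 0" using M_pos[of x] by simp
    have "S2 u + S2 v = (\<Sum>A\<in>Pow E. M A * ((u A)\<^sup>2 + (v A)\<^sup>2))"
      unfolding S2_def by (simp add: sum.distrib algebra_simps)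
    also have "\<dots> \<ge> M x * ((u x)\<^sup>2 + (v x)\<^sup>2)"
      by (rule member_le_sum[OF x(1)]) (use M_pos finE in \<open>auto intro: mult_nonneg_nonneg simp: less_imp_le\<close>)
    finally show ?thesis using pos by linarith
  qed
  have eq: "\<xi> * complex_of_real (S2 u + S2 v) = complex_of_real (Qf u + Qf v)"
    unfolding u_def v_def by (rule eig_quad[OF f2])
  have Tne: "complex_of_real (S2 u + S2 v) \<noteq> 0"
  proof
    assume "complex_of_real (S2 u + S2 v) = 0"
    then have "S2 u + S2 v = 0" by (simp only: of_real_eq_0_iff)
    with Tpos show False by simp
  qed
  have "\<xi> = complex_of_real (Qf u + Qf v) / complex_of_real (S2 u + S2 v)"
    using eq Tne by (metis nonzero_mult_div_cancel_right)
  then have xi: "\<xi> = complex_of_real ((Qf u + Qf v) / (S2 u + S2 v))"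
    by (simp only: of_real_divide)
  have nn: "(Qf u + Qf v) / (S2 u + S2 v) \<ge> 0" using Qf_nonneg[of u] Qf_nonneg[of v] Tpos by simp
  have "cmod \<xi> = \<bar>(Qf u + Qf v) / (S2 u + S2 v)\<bar>" unfolding xi by (rule norm_of_real)
  also have "\<dots> = (Qf u + Qf v) / (S2 u + S2 v)" using nn by (rule abs_of_nonneg)
  also have "\<dots> \<le> c * (S2 u + S2 v) / (S2 u + S2 v)"
    using qu qv Tpos by (intro divide_right_mono) (auto simp: algebra_simps)
  also have "\<dots> = c" using Tpos by simp
  finally show ?thesis unfolding c_def .
qed

theorem corollary4p11:
  fixes V :: "'v set" and E :: "'e set" and ends :: "'e \<Rightarrow> 'v set"
    and l :: nat and p :: real and q :: nat
  assumes "finite_graph V E ends"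
    and "linear_width E ends \<le> l"
    and "0 < p" and "p < 1"
    and "1 \<le> q"
  shows "spectral_gap (Pow E) (SW_RC V E ends p q)
           \<ge> 1 / (2 * real q ^ (l + 1)) * (1 / real (card E) ^ 2)"
proof -
  interpret swl V E ends p q using assms by unfold_locales auto
  obtain es0 where es0: "distinct es0" "set es0 = E" using finite_distinct_list[OF finE] by blast
  have ex: "\<exists>k. \<exists>es. distinct es \<and> set es = E \<and> ordering_width ends es \<le> k"
    using es0 by blast
  have "\<exists>es. distinct es \<and> set es = E \<and> ordering_width ends es \<le> linear_width E ends"
    unfolding linear_width_def by (rule LeastI_ex[OF ex])
  then obtain es where es: "distinct es" "set es = E" and ow0: "ordering_width ends es \<le> linear_width E ends"
    by blast
  have ow: "ordering_width ends es \<le> l" using le_trans[OF ow0 assms(2)] .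
  have width: "\<forall>i\<le>length es. card ((\<Union>e\<in>set (take i es). ends e) \<inter> (\<Union>e\<in>set (drop i es). ends e)) \<le> l"
  proof (intro allI impI)
    fix i assume i: "i \<le> length es"
    have "card ((\<Union>e\<in>set (take i es). ends e) \<inter> (\<Union>e\<in>set (drop i es). ends e)) \<le> ordering_width ends es"
      unfolding ordering_width_def by (rule Max_ge) (use i in auto)
    then show "card ((\<Union>e\<in>set (take i es). ends e) \<inter> (\<Union>e\<in>set (drop i es). ends e)) \<le> l" using ow by simp
  qed
  define K where "K = real (card E) ^ 2 * real q ^ (l + 1)"
  define c where "c = 1 - 1 / K"
  have c0: "0 \<le> c"
  proof (cases "card E = 0")
    case True then show ?thesis unfolding c_def K_def by simp
  next
    case False
    then have "real (card E) ^ 2 \<ge> 1" by simp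
    moreover have "real q ^ (l + 1) \<ge> 1" by (rule one_le_power) (use q1 in simp)
    ultimately have "K \<ge> 1" unfolding K_def by (metis mult_mono' one_le_power zero_le_one mult_1 of_nat_0_le_iff zero_le_power)
    then show ?thesis unfolding c_def by (simp add: field_simps)
  qed
  define S where "S = {cmod \<xi> |\<xi>. is_eigenvalue (Pow E) P \<xi> \<and> \<xi> \<noteq> 1}"
  have finS: "finite S"
  proof -
    have "S \<subseteq> cmod ` {\<xi>. is_eigenvalue (Pow E) P \<xi>}" unfolding S_def by auto
    moreover have "finite {\<xi>. is_eigenvalue (Pow E) P \<xi>}" by (rule finite_eigs) (use finE in simp)
    ultimately show ?thesis using finite_subset by blast
  qed
  have Sle: "\<forall>s\<in>S. s \<le> c"
    unfolding S_def c_def K_def using eig_bound[OF es width] by blast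
  have "Max (insert 0 S) \<le> c" by (rule Max.boundedI) (use finS Sle c0 in auto)
  then have gap: "spectral_gap (Pow E) P \<ge> 1 / K"
    unfolding spectral_gap_def S_def[symmetric] c_def by simp
  have K0: "K \<ge> 0" unfolding K_def by simp
  have "1 / (2 * real q ^ (l + 1)) * (1 / real (card E) ^ 2) = (1 / 2) * (1 / K)"
    unfolding K_def by (simp add: field_simps)
  also have "\<dots> \<le> 1 / K"
  proof -
    have "0 \<le> 1 / K" using K0 by simp
    then show ?thesis by linarith
  qed
  finally show ?thesis using gap by linarith
qed

end
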